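(* Suppose $(x,y)$ is defined over a $\sigma$-finite space $\mathcal{X}\times\mathcal{Y}$ and $x$ is a real sub-Gaussian random variable with mean $0$ upper-exponentially bounded by $K$. Let $m(y)=\mathbb{E}[x\mid y]$ and $\epsilon(y)=x-m(y)$. Then: (i) $m(y)$ and $\epsilon(y)$ are sub-Gaussian and upper-exponentially bounded by $K$ and $2K$ respectively. (ii) Let $\mathcal{Z}=\{y:\exists t\in(0,t_0]\text{ such that }\int_{\mathcal{X}}\exp(tx^2)p(x\mid y)p(y)\,dx=\infty\}$; then $\mathbb{P}(y\in\mathcal{Z})=0$. (iii) For any fixed constants $0<C_1<1<C_2$ and any partition $\mathbb{R}=\bigcup_{h=1}^HS_h$ into intervals with $\frac{C_1}{H}\le\mathbb{P}(y\in S_h)\le\frac{C_2}{H}$ for all $h$, there is a constant $C$ with \[\sup_h\mathbb{P}(x|_{y\in S_h}>t)\le CH\exp\Big(1-\frac{t^2}{K^2}\Big);\] moreover there is a positive constant $C$ such that $\mathbb{E}\big[\exp\big((x|_{y\in S_h})^2/(2K^2)\big)\big]\le CH$ and $\mathbb{E}\big[|x|_{y\in S_h}|^m\big]\le CHmK^m\Gamma(m/2)/2$. (iv) With $S_h$ as in (iii), let $x_1,\dots,x_c$ be $c$ i.i.d. samples from $x|_{y\in S_h}$, $\bar x_h=\frac1c\sum_ix_i$ and $\mu_h=\mathbb{E}[x|_{y\in S_h}]$. Then \[\mathbb{P}(|\bar x_h-\mu_h|>t)\le2\exp\Big(\frac{-ct^2}{2CHK^2+2tK}\Big).\]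
   Context: $x|_{y\in S}$ denotes a random variable with the conditional distribution of $x$ given $y\in S$; $p(x\mid y)$, $p(y)$ are conditional and marginal densities. $t_0>0$ is a constant with $\mathbb{E}\exp(tx^2)\le e$ for $0\le t\le t_0$ (it exists by sub-Gaussianity). Upper-exponential bound: $z$ is upper-exponentially bounded by $K$ if $K>\max\{K_1,K_2,K_3,K_4\}$ where $P(|z|>t)\le\exp(1-t^2/K_1^2)$ for all $t\ge0$, $(\mathbb{E}|z|^q)^{1/q}\le K_2\sqrt q$ for all $q\ge1$, $\mathbb{E}\exp(z^2/K_3^2)\le e$, and (if $\mathbb{E}z=0$) $\mathbb{E}\exp(tz)\le\exp(t^2K_4^2)$ for all $t$. *)

theory Defs
  imports "HOL-Probability.Probability"
begin

definition subgaussian :: "'a measure \<Rightarrow> ('a \<Rightarrow> real) \<Rightarrow> bool" where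
  "subgaussian M z \<longleftrightarrow> z \<in> borel_measurable M \<and>
     (\<exists>L>0. \<forall>t\<ge>0. measure M {\<omega>\<in>space M. \<bar>z \<omega>\<bar> > t} \<le> 2 * exp (- (t\<^sup>2 / L\<^sup>2)))"

text \<open>Upper-exponential boundedness by K, as in the paper. Moment condition
  (E|z|^q)^(1/q) <= K2 sqrt q is written equivalently as E|z|^q <= (K2 sqrt q)^q
  with nonnegative integrals.\<close>
definition upexp_bounded :: "'a measure \<Rightarrow> ('a \<Rightarrow> real) \<Rightarrow> real \<Rightarrow> bool" where
  "upexp_bounded M z K \<longleftrightarrow>
    (\<exists>K1 K2 K3 K4. 0 < K1 \<and> 0 < K2 \<and> 0 < K3 \<and> 0 < K4 \<and>
       K > Max {K1, K2, K3, K4} \<and>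
       (\<forall>t\<ge>0. measure M {\<omega>\<in>space M. \<bar>z \<omega>\<bar> > t} \<le> exp (1 - t\<^sup>2 / K1\<^sup>2)) \<and>
       (\<forall>q::real. q \<ge> 1 \<longrightarrow>
          (\<integral>\<^sup>+\<omega>. ennreal (\<bar>z \<omega>\<bar> powr q) \<partial>M) \<le> ennreal ((K2 * sqrt q) powr q)) \<and>
       (\<integral>\<^sup>+\<omega>. ennreal (exp ((z \<omega>)\<^sup>2 / K3\<^sup>2)) \<partial>M) \<le> ennreal (exp 1) \<and>
       ((integrable M z \<and> (\<integral>\<omega>. z \<omega> \<partial>M) = 0) \<longrightarrow>
          (\<forall>t::real. (\<integral>\<^sup>+\<omega>. ennreal (exp (t * z \<omega>)) \<partial>M) \<le> ennreal (exp (t\<^sup>2 * K4\<^sup>2)))))"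

definition interval_partition :: "nat \<Rightarrow> (nat \<Rightarrow> real set) \<Rightarrow> bool" where
  "interval_partition H S \<longleftrightarrow> H \<ge> 1 \<and> (\<forall>h\<in>{1..H}. is_interval (S h)) \<and>
     disjoint_family_on S {1..H} \<and> (\<Union>h\<in>{1..H}. S h) = UNIV"

text \<open>The probability space conditioned on the event Y in S; the random variable
  x restricted to y in S is X viewed on this measure.\<close>
definition cond_on :: "'a measure \<Rightarrow> ('a \<Rightarrow> real) \<Rightarrow> real set \<Rightarrow> 'a measure" where
  "cond_on M Y S = uniform_measure M {\<omega>\<in>space M. Y \<omega> \<in> S}"

end

theory Submission
  imports Defs
begin


lemma exp_taylor2: "exp (u::real) \<le> 1 + u + u\<^sup>2 / 2 * exp \<bar>u\<bar>"
proof -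
  obtain t where t: "\<bar>t\<bar> \<le> \<bar>u\<bar>" "exp u = (\<Sum>m<2. u ^ m / fact m) + exp t / fact 2 * u ^ 2"
    using Maclaurin_exp_le[of u 2] by blast
  have "exp t \<le> exp \<bar>u\<bar>" using t(1) by simp
  hence "exp t / fact 2 * u ^ 2 \<le> exp \<bar>u\<bar> / 2 * u^2"
    by (intro mult_right_mono) (auto simp: fact_numeral)
  thus ?thesis using t(2) by (simp add: eval_nat_numeral fact_numeral field_simps)
qed

lemma powr_le_exp_bound:
  fixes v a :: real assumes "v \<ge> 0" "a > 0"
  shows "v powr a \<le> (a / exp 1) powr a * exp v"
proof (cases "v = 0")
  case True thus ?thesis using assms by simp
next
  case False
  hence v: "v > 0" using assms by simp
  have "ln (v / a) \<le> v / a - 1" using v assms by (intro ln_le_minus_one) simp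
  hence "a * ln (v/a) \<le> v - a" using assms by (simp add: field_simps)
  hence "a * ln v \<le> a * ln a + v - a" using v assms by (simp add: ln_div algebra_simps)
  hence "exp (a * ln v) \<le> exp (a * ln a - a + v)" by simp
  moreover have "v powr a = exp (a * ln v)" using v by (simp add: powr_def)
  moreover have "(a / exp 1) powr a * exp v = exp (a * ln a - a + v)"
    using assms by (simp add: powr_def ln_div exp_add[symmetric] algebra_simps)
  ultimately show ?thesis by simp
qed

lemma one_plus_inv_powr: assumes "z > (0::real)" shows "(1 + 1/z) powr z \<le> exp 1"
proof -
  have "ln (1 + 1/z) \<le> 1/z" using assms by (intro ln_add_one_self_le_self) simp
  hence "z * ln (1 + 1/z) \<le> 1" using assms by (simp add: field_simps)
  moreover have "1/z > 0" using assms by simp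
  hence "1 + 1/z > 0" by linarith
  ultimately show ?thesis by (simp add: powr_def)
qed

lemma gamma_step:
  assumes z: "z > (0::real)" and IH: "(z / exp 1) powr z \<le> z * Gamma z"
  shows "((z+1) / exp 1) powr (z+1) \<le> (z+1) * Gamma (z+1)"
proof -
  have G: "Gamma (z+1) = z * Gamma z" using Gamma_plus1[of z] z by (auto simp: nonpos_Ints_def)
  have iz: "1/z > 0" using z by simp
  hence iz1: "1 + 1/z > 0" by linarith
  have e1: "(z+1)/exp 1 = (z / exp 1) * (1 + 1/z)" using z by (simp add: field_simps)
  have A: "((z+1) / exp 1) powr (z+1) = ((z+1)/exp 1) * ((z+1)/exp 1) powr z"
    using z by (simp add: powr_add)
  have B: "((z+1)/exp 1) powr z = (z / exp 1) powr z * (1 + 1/z) powr z"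
    unfolding e1 using z iz1 powr_mult[of "z / exp 1" "1 + 1/z" z] by simp
  have C: "(z / exp 1) powr z * (1 + 1/z) powr z \<le> (z * Gamma z) * exp 1"
    using z IH one_plus_inv_powr[OF z] by (intro mult_mono) auto
  have "((z+1) / exp 1) powr (z+1) \<le> ((z+1)/exp 1) * ((z * Gamma z) * exp 1)"
    unfolding A B using C z by (intro mult_left_mono) auto
  also have "\<dots> = (z+1) * (z * Gamma z)" by simp
  finally show ?thesis using G by simp
qed

lemma gamma_half_bound:
  fixes m :: nat assumes "m \<ge> 1"
  shows "(real m / 2 / exp 1) powr (real m / 2) \<le> real m / 2 * Gamma (real m / 2)"
  using assms
proof (induction m rule: less_induct)
  case (less m)
  show ?case
  proof (cases "m \<le> 2")
    case True
    hence "m = 1 \<or> m = 2" using less.prems by auto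
    thus ?thesis
    proof
      assume m: "m = 1"
      have e: "exp 1 \<ge> (2::real)" using exp_ge_add_one_self[of 1] by simp
      have "1 / 2 / exp 1 \<le> (1/4::real)" using e by (simp add: field_simps)
      also have "(1/4::real) \<le> pi / 4 / 4 * 4" using pi_ge_two by simp
      finally have "(1/2/exp 1) powr (1/2) \<le> (pi/4) powr (1/2)" by (intro powr_mono2) auto
      also have "(pi/4) powr (1/2) = sqrt pi / 2"
        by (simp add: powr_half_sqrt real_sqrt_divide)
      finally show ?thesis using m by (simp add: Gamma_one_half_real)
    next
      assume m: "m = 2"
      have "exp (-1) \<le> (1::real)" by simp
      thus ?thesis using m by (simp add: powr_one exp_minus field_simps)
    qed
  next
    case False
    define k where "k = m - 2"
    have k: "k \<ge> 1" "k < m" "real m / 2 = real k / 2 + 1" using False by (auto simp: k_def of_nat_diff field_simps)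
    have "(real k / 2 / exp 1) powr (real k / 2) \<le> real k / 2 * Gamma (real k / 2)"
      using less.IH[OF k(2) k(1)] .
    from gamma_step[OF _ this] k(1) have "((real k / 2 + 1) / exp 1) powr (real k / 2 + 1) \<le> (real k / 2 + 1) * Gamma (real k / 2 + 1)" by simp
    thus ?thesis unfolding k(3) .
  qed
qed



lemma convex_abs_comp:
  fixes h :: "real \<Rightarrow> real"
  assumes cv: "convex_on {0..} h" and mo: "\<And>x y. 0 \<le> x \<Longrightarrow> x \<le> y \<Longrightarrow> h x \<le> h y"
  shows "convex_on UNIV (\<lambda>x. h \<bar>x\<bar>)"
proof (rule convex_onI)
  fix t x y :: real assume t: "0 < t" "t < 1"
  have "\<bar>(1 - t) *\<^sub>R x + t *\<^sub>R y\<bar> \<le> (1 - t) * \<bar>x\<bar> + t * \<bar>y\<bar>"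
    using t by (simp add: abs_triangle_ineq[THEN order_trans] abs_mult)
  hence "h \<bar>(1 - t) *\<^sub>R x + t *\<^sub>R y\<bar> \<le> h ((1 - t) * \<bar>x\<bar> + t * \<bar>y\<bar>)"
    by (intro mo) auto
  also have "\<dots> \<le> (1 - t) * h \<bar>x\<bar> + t * h \<bar>y\<bar>"
    using convex_onD[OF cv, of t "\<bar>x\<bar>" "\<bar>y\<bar>"] t by simp
  finally show "h \<bar>(1 - t) *\<^sub>R x + t *\<^sub>R y\<bar> \<le> (1 - t) * h \<bar>x\<bar> + t * h \<bar>y\<bar>" .
qed simp

lemma convex_powr_nonneg:
  fixes q :: real assumes q: "q \<ge> 1"
  shows "convex_on {0..} (\<lambda>x. x powr q)"
proof (rule convex_onI)
  fix t x y :: real assume t: "0 < t" "t < 1" and xy: "x \<in> {0..}" "y \<in> {0..}"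
  show "((1 - t) *\<^sub>R x + t *\<^sub>R y) powr q \<le> (1 - t) * x powr q + t * y powr q"
  proof (cases "x = 0 \<or> y = 0")
    case False
    hence "x \<in> {0<..}" "y \<in> {0<..}" using xy by auto
    from convex_onD[OF powr_convex[OF q], of t x y] this t show ?thesis by auto
  next
    case True
    have tq: "t powr q \<le> t" "(1-t) powr q \<le> 1 - t"
      using t q powr_mono[of 1 q t] powr_mono[of 1 q "1-t"]
      by (auto intro: powr_le_one_le)
    show ?thesis
    proof (cases "x = 0")
      case True
      have "(t * y) powr q = t powr q * y powr q" using t xy by (simp add: powr_mult)
      also have "\<dots> \<le> t * y powr q" using tq by (intro mult_right_mono) auto
      finally show ?thesis using True t by simp
    next
      case False
      hence y: "y = 0" using True by simp
      have "((1-t) * x) powr q = (1-t) powr q * x powr q" using t xy by (simp add: powr_mult)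
      also have "\<dots> \<le> (1-t) * x powr q" using tq by (intro mult_right_mono) auto
      finally show ?thesis using y t by simp
    qed
  qed
qed (auto simp: convex_real_interval)

lemma convex_abs_powr: "q \<ge> 1 \<Longrightarrow> convex_on UNIV (\<lambda>x::real. \<bar>x\<bar> powr q)"
  by (rule convex_abs_comp[OF convex_powr_nonneg]) (auto intro: powr_mono2)

lemma convex_exp_sq:
  assumes "c \<ge> (0::real)" shows "convex_on UNIV (\<lambda>x. exp (c * x\<^sup>2))"
proof (rule f''_ge0_imp_convex)
  show "DERIV (\<lambda>x. exp (c * x\<^sup>2)) x :> 2 * c * x * exp (c * x\<^sup>2)" for x
    by (rule derivative_eq_intros refl | simp)+
  show "DERIV (\<lambda>x. 2 * c * x * exp (c * x\<^sup>2)) x :> (2 * c + 4 * c\<^sup>2 * x\<^sup>2) * exp (c * x\<^sup>2)" for x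
    by (rule derivative_eq_intros refl | simp add: power2_eq_square algebra_simps)+
  show "0 \<le> (2 * c + 4 * c\<^sup>2 * x\<^sup>2) * exp (c * x\<^sup>2)" for x using assms by simp
qed auto

lemma convex_exp_lin: "convex_on UNIV (\<lambda>x::real. exp (t * x))"
proof (rule f''_ge0_imp_convex)
  show "DERIV (\<lambda>x. exp (t * x)) x :> t * exp (t * x)" for x
    by (rule derivative_eq_intros refl | simp)+
  show "DERIV (\<lambda>x. t * exp (t * x)) x :> t * t * exp (t * x)" for x
    by (rule derivative_eq_intros refl | simp)+
qed auto

lemma convex_sq_exp_abs:
  assumes "l \<ge> (0::real)" shows "convex_on UNIV (\<lambda>x. x\<^sup>2 * exp (2 * l * \<bar>x\<bar>))"
proof -
  have "convex_on {0..} (\<lambda>x. x\<^sup>2 * exp (2 * l * x))"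
  proof (rule f''_ge0_imp_convex)
    show "DERIV (\<lambda>x. x\<^sup>2 * exp (2 * l * x)) x :> (2 * x + 2 * l * x\<^sup>2) * exp (2 * l * x)" for x
      by (rule derivative_eq_intros refl | simp add: power2_eq_square algebra_simps)+
    show "DERIV (\<lambda>x. (2 * x + 2 * l * x\<^sup>2) * exp (2 * l * x)) x :>
            (2 + 8 * l * x + 4 * l\<^sup>2 * x\<^sup>2) * exp (2 * l * x)" for x
      by (rule derivative_eq_intros refl | simp add: power2_eq_square algebra_simps)+
    show "0 \<le> (2 + 8 * l * x + 4 * l\<^sup>2 * x\<^sup>2) * exp (2 * l * x)" if "x \<in> {0..}" for x
      using that assms by (intro mult_nonneg_nonneg) auto
  qed (auto simp: convex_real_interval)
  hence "convex_on UNIV (\<lambda>x. \<bar>x\<bar>\<^sup>2 * exp (2 * l * \<bar>x\<bar>))"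
    by (rule convex_abs_comp) (use assms in \<open>auto intro!: mult_mono power_mono\<close>)
  thus ?thesis by simp
qed

lemma exp_sq_diff:
  assumes k: "k > (0::real)"
  shows "exp ((a - b)\<^sup>2 / (2*k)\<^sup>2) \<le> exp (a\<^sup>2 / k\<^sup>2) / 2 + exp (b\<^sup>2 / k\<^sup>2) / 2"
proof -
  have "(a - b)\<^sup>2 \<le> 2 * a\<^sup>2 + 2 * b\<^sup>2" using zero_le_square[of "a+b"] by (simp add: power2_eq_square algebra_simps)
  hence "(a - b)\<^sup>2 / (4 * k\<^sup>2) \<le> (2 * a\<^sup>2 + 2 * b\<^sup>2) / (4 * k\<^sup>2)" using k by (intro divide_right_mono) auto
  moreover have "(2 * a\<^sup>2 + 2 * b\<^sup>2) / (4 * k\<^sup>2) = (a\<^sup>2 / k\<^sup>2)/2 + (b\<^sup>2 / k\<^sup>2)/2" using k by (simp add: field_simps)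
  moreover have "(2*k)\<^sup>2 = 4 * k\<^sup>2" by (simp add: power2_eq_square)
  ultimately have "(a - b)\<^sup>2 / (2*k)\<^sup>2 \<le> (a\<^sup>2 / k\<^sup>2)/2 + (b\<^sup>2 / k\<^sup>2)/2" by simp
  hence "exp ((a - b)\<^sup>2 / (2*k)\<^sup>2) \<le> exp ((a\<^sup>2 / k\<^sup>2)/2) * exp ((b\<^sup>2 / k\<^sup>2)/2)"
    by (simp add: exp_add[symmetric])
  also have "\<dots> \<le> exp (a\<^sup>2 / k\<^sup>2) / 2 + exp (b\<^sup>2 / k\<^sup>2) / 2"
  proof -
    define u v where "u = exp ((a\<^sup>2 / k\<^sup>2)/2)" and "v = exp ((b\<^sup>2 / k\<^sup>2)/2)"
    have "exp (a\<^sup>2 / k\<^sup>2) = u * u" "exp (b\<^sup>2 / k\<^sup>2) = v * v" unfolding u_def v_def by (simp_all add: exp_add[symmetric])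
    moreover have "u * v \<le> u * u / 2 + v * v / 2" using zero_le_square[of "u - v"] by (simp add: algebra_simps)
    ultimately show ?thesis unfolding u_def v_def by simp
  qed
  finally show ?thesis .
qed

lemma exp_lin_diff: "exp ((t::real) * (a - b)) \<le> exp (2*t*a) / 2 + exp (- (2*t) * b) / 2"
proof -
  define u v where "u = exp (t*a)" and "v = exp (-t*b)"
  have e: "t * (a - b) = t*a + (-t*b)" by (simp add: algebra_simps)
  have "exp (t * (a - b)) = u * v" unfolding u_def v_def e by (rule exp_add)
  moreover have "exp (2*t*a) = u * u" "exp (- (2*t) * b) = v * v" unfolding u_def v_def by (simp_all add: exp_add[symmetric])
  moreover have "u * v \<le> u * u / 2 + v * v / 2" using zero_le_square[of "u - v"] by (simp add: algebra_simps)
  ultimately show ?thesis by simp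
qed

lemma powr_diff_bound:
  fixes a b q :: real assumes q: "q \<ge> 1"
  shows "\<bar>a - b\<bar> powr q \<le> 2 powr q * (\<bar>a\<bar> powr q / 2 + \<bar>b\<bar> powr q / 2)"
proof -
  define c where "c = (1 - 1/2) * \<bar>a\<bar> + (1/2) * \<bar>b\<bar>"
  have c0: "c \<ge> 0" by (simp add: c_def)
  have "\<bar>a - b\<bar> powr q \<le> (2 * c) powr q" unfolding c_def by (intro powr_mono2) (use q in auto)
  also have "(2 * c) powr q = 2 powr q * c powr q" using c0 by (simp add: powr_mult)
  also have "c powr q \<le> (1 - 1/2) * \<bar>a\<bar> powr q + (1/2) * \<bar>b\<bar> powr q"
    unfolding c_def using convex_onD[OF convex_powr_nonneg[OF q], of "1/2" "\<bar>a\<bar>" "\<bar>b\<bar>"] by simp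
  finally show ?thesis by (simp add: mult_left_mono)
qed

lemma sq_exp_bound:
  fixes x l k :: real assumes k: "k > 0" and l: "\<bar>l\<bar> \<le> 1 / k"
  shows "x\<^sup>2 * exp (2 * \<bar>l\<bar> * \<bar>x\<bar>) \<le> 2 * exp 2 * k\<^sup>2 * exp (x\<^sup>2 / k\<^sup>2)"
proof -
  define y where "y = \<bar>x\<bar> / k"
  have y0: "y \<ge> 0" using k by (simp add: y_def)
  have x2: "x\<^sup>2 = k\<^sup>2 * y\<^sup>2" using k by (simp add: y_def power_divide)
  have "\<bar>l\<bar> * \<bar>x\<bar> \<le> (1/k) * \<bar>x\<bar>" using l by (intro mult_right_mono) auto
  hence lx: "2 * \<bar>l\<bar> * \<bar>x\<bar> \<le> 2 * y" by (simp add: y_def)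
  have "y\<^sup>2 / 2 \<le> exp (y\<^sup>2/2)" using exp_ge_add_one_self[of "y\<^sup>2/2"] by linarith
  hence y2: "y\<^sup>2 \<le> 2 * exp (y\<^sup>2/2)" by simp
  have q: "2 * y + y\<^sup>2/2 \<le> 2 + y\<^sup>2" using zero_le_square[of "y - 2"] by (simp add: power2_eq_square algebra_simps)
  have "x\<^sup>2 * exp (2 * \<bar>l\<bar> * \<bar>x\<bar>) \<le> k\<^sup>2 * y\<^sup>2 * exp (2 * y)"
    unfolding x2 using lx by (intro mult_left_mono) auto
  also have "\<dots> \<le> k\<^sup>2 * (2 * exp (y\<^sup>2/2)) * exp (2 * y)"
    using y2 by (intro mult_right_mono mult_left_mono) auto
  also have "\<dots> = 2 * k\<^sup>2 * exp (2 * y + y\<^sup>2/2)" by (simp add: exp_add)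
  also have "\<dots> \<le> 2 * k\<^sup>2 * exp (2 + y\<^sup>2)" using q by (intro mult_left_mono) auto
  also have "\<dots> = 2 * exp 2 * k\<^sup>2 * exp (x\<^sup>2 / k\<^sup>2)"
    using k by (simp add: exp_add x2)
  finally show ?thesis .
qed

lemma abs_pow_bound:
  fixes x k :: real and m :: nat assumes k: "k > 0" and m: "m \<ge> 1"
  shows "\<bar>x\<bar> ^ m \<le> k ^ m * (real m * Gamma (real m / 2) / 2) * exp (x\<^sup>2 / k\<^sup>2)"
proof -
  define v where "v = x\<^sup>2 / k\<^sup>2"
  have v0: "v \<ge> 0" by (simp add: v_def)
  have a: "real m / 2 > 0" using m by simp
  have "\<bar>x\<bar> ^ m = k ^ m * (\<bar>x\<bar> / k) ^ m" using k by (simp add: power_divide)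
  also have "(\<bar>x\<bar> / k) ^ m = v powr (real m / 2)"
  proof -
    have "v = (\<bar>x\<bar> / k) ^ 2" by (simp add: v_def power_divide)
    hence "v powr (real m / 2) = ((\<bar>x\<bar> / k) ^ 2) powr (real m / 2)" by simp
    also have "\<dots> = (\<bar>x\<bar> / k) powr (2 * (real m / 2))"
      using k by (subst powr_powr[symmetric]) (simp add: powr_realpow')
    also have "\<dots> = (\<bar>x\<bar> / k) ^ m"
      using k by (cases "x = 0") (use m in \<open>auto simp: powr_realpow\<close>)
    finally show ?thesis ..
  qed
  also have "v powr (real m / 2) \<le> (real m / 2 / exp 1) powr (real m / 2) * exp v"
    by (rule powr_le_exp_bound[OF v0 a])
  also have "\<dots> \<le> (real m * Gamma (real m / 2) / 2) * exp v"
    using gamma_half_bound[OF m] by (intro mult_right_mono) auto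
  finally show ?thesis using k by (simp add: v_def mult_left_mono)
qed



lemma markov_tail:
  assumes M: "prob_space M" and z[measurable]: "z \<in> borel_measurable M" and a: "a > 0"
    and E: "(\<integral>\<^sup>+\<omega>. ennreal (exp ((z \<omega>)\<^sup>2 / a\<^sup>2)) \<partial>M) \<le> ennreal (exp 1)" and t: "t \<ge> 0"
  shows "measure M {\<omega>\<in>space M. \<bar>z \<omega>\<bar> > t} \<le> exp (1 - t\<^sup>2 / a\<^sup>2)"
proof -
  interpret prob_space M by fact
  define c where "c = ennreal (exp (- t\<^sup>2 / a\<^sup>2))"
  define u where "u = (\<lambda>\<omega>. ennreal (exp ((z \<omega>)\<^sup>2 / a\<^sup>2)))"
  have sub: "{\<omega>\<in>space M. \<bar>z \<omega>\<bar> > t} \<subseteq> {\<omega>\<in>space M. 1 \<le> c * u \<omega>}"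
  proof safe
    fix \<omega> assume "\<omega> \<in> space M" "\<bar>z \<omega>\<bar> > t"
    hence "t\<^sup>2 < \<bar>z \<omega>\<bar>\<^sup>2" using t by (intro power_strict_mono) auto
    hence "t\<^sup>2 / a\<^sup>2 \<le> (z \<omega>)\<^sup>2 / a\<^sup>2" using a by (intro divide_right_mono) auto
    hence "1 \<le> exp (- t\<^sup>2 / a\<^sup>2) * exp ((z \<omega>)\<^sup>2 / a\<^sup>2)"
      by (simp add: exp_add[symmetric])
    thus "1 \<le> c * u \<omega>" unfolding c_def u_def by (simp add: ennreal_mult'[symmetric])
  qed
  have "emeasure M {\<omega>\<in>space M. \<bar>z \<omega>\<bar> > t} \<le> emeasure M {\<omega>\<in>space M. 1 \<le> c * u \<omega>}"
    using sub by (intro emeasure_mono) (auto simp: u_def c_def)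
  also have "\<dots> \<le> c * (\<integral>\<^sup>+ \<omega>. u \<omega> * indicator (space M) \<omega> \<partial>M)"
    by (rule nn_integral_Markov_inequality) (auto simp: u_def)
  also have "(\<integral>\<^sup>+ \<omega>. u \<omega> * indicator (space M) \<omega> \<partial>M) = (\<integral>\<^sup>+ \<omega>. u \<omega> \<partial>M)"
    by (intro nn_integral_cong) auto
  also have "c * (\<integral>\<^sup>+ \<omega>. u \<omega> \<partial>M) \<le> c * ennreal (exp 1)"
    using E unfolding u_def by (intro mult_left_mono) auto
  also have "\<dots> = ennreal (exp (1 - t\<^sup>2 / a\<^sup>2))"
    unfolding c_def by (simp add: ennreal_mult'[symmetric] exp_add[symmetric])
  finally show ?thesis
    by (simp add: emeasure_eq_measure)
qed

lemma subg_from_tail: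
  assumes M: "prob_space M" and z: "z \<in> borel_measurable M" and a: "a > 0"
    and T: "\<And>t. t \<ge> 0 \<Longrightarrow> measure M {\<omega>\<in>space M. \<bar>z \<omega>\<bar> > t} \<le> exp (1 - t\<^sup>2 / a\<^sup>2)"
  shows "subgaussian M z"
  unfolding subgaussian_def
proof (intro conjI z exI[of _ "2*a"] allI impI)
  interpret prob_space M by fact
  show "2*a > 0" using a by simp
  fix t :: real assume t: "t \<ge> 0"
  define u where "u = t\<^sup>2 / a\<^sup>2"
  have u0: "u \<ge> 0" by (simp add: u_def)
  have L: "t\<^sup>2 / (2*a)\<^sup>2 = u / 4" by (simp add: u_def power2_eq_square field_simps)
  show "measure M {\<omega>\<in>space M. \<bar>z \<omega>\<bar> > t} \<le> 2 * exp (- (t\<^sup>2 / (2*a)\<^sup>2))"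
  proof (cases "u \<le> 2")
    case True
    have "1/2 \<le> 1 + (- (u/4))" using True by simp
    also have "\<dots> \<le> exp (- (u/4))" by (rule exp_ge_add_one_self)
    finally have "1 \<le> 2 * exp (- (u/4))" by simp
    moreover have "measure M {\<omega>\<in>space M. \<bar>z \<omega>\<bar> > t} \<le> 1" by simp
    ultimately show ?thesis unfolding L by linarith
  next
    case False
    have "measure M {\<omega>\<in>space M. \<bar>z \<omega>\<bar> > t} \<le> exp (1 - u)" using T[OF t] by (simp add: u_def)
    also have "\<dots> \<le> exp (- (u/4))" using False by simp
    also have "\<dots> \<le> 2 * exp (- (u/4))" by simp
    finally show ?thesis unfolding L .
  qed
qed

lemma cond_jensen_nn:
  fixes q :: "real \<Rightarrow> real"
  assumes M: "prob_space M" and F: "subalgebra M F" and X: "integrable M X"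
    and cv: "convex_on UNIV q" and qm[measurable]: "q \<in> borel_measurable borel"
    and q0: "\<And>x. q x \<ge> 0" and qX: "integrable M (\<lambda>\<omega>. q (X \<omega>))"
  shows "(\<integral>\<^sup>+\<omega>. ennreal (q (real_cond_exp M F X \<omega>)) \<partial>M) \<le> (\<integral>\<^sup>+\<omega>. ennreal (q (X \<omega>)) \<partial>M)"
proof -
  interpret prob_space M by fact
  interpret finite_measure_subalgebra M F by unfold_locales (rule F)
  have J: "AE x in M. q (real_cond_exp M F X x) \<le> real_cond_exp M F (\<lambda>x. q (X x)) x"
    by (rule real_cond_exp_jensens_inequality(2)[where I=UNIV]) (use X qX cv in auto)
  have [measurable]: "(\<lambda>\<omega>. q (X \<omega>)) \<in> borel_measurable M" using qX by auto
  have pos: "AE x in M. real_cond_exp M F (\<lambda>x. q (X x)) x \<ge> 0"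
    by (rule real_cond_exp_pos) (auto simp: q0)
  have "(\<integral>\<^sup>+\<omega>. ennreal (q (real_cond_exp M F X \<omega>)) \<partial>M) \<le>
        (\<integral>\<^sup>+\<omega>. ennreal (real_cond_exp M F (\<lambda>x. q (X x)) \<omega>) \<partial>M)"
    using J by (intro nn_integral_mono_AE) (auto elim!: eventually_mono intro: ennreal_leI)
  also have "\<dots> = ennreal (\<integral>\<omega>. real_cond_exp M F (\<lambda>x. q (X x)) \<omega> \<partial>M)"
    by (intro nn_integral_eq_integral real_cond_exp_int(1) qX pos)
  also have "(\<integral>\<omega>. real_cond_exp M F (\<lambda>x. q (X x)) \<omega> \<partial>M) = (\<integral>\<omega>. q (X \<omega>) \<partial>M)"
    by (intro real_cond_exp_int(2) qX)
  also have "ennreal \<dots> = (\<integral>\<^sup>+\<omega>. ennreal (q (X \<omega>)) \<partial>M)"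
    by (intro nn_integral_eq_integral[symmetric] qX) (auto simp: q0)
  finally show ?thesis .
qed



lemma Max4_less: "(K::real) > Max {a,b,c,d} \<longleftrightarrow> K > a \<and> K > b \<and> K > c \<and> K > d"
  by simp

lemma nn_avg:
  fixes f g h :: "'a \<Rightarrow> real"
  assumes [measurable]: "f \<in> borel_measurable M" "g \<in> borel_measurable M"
    and f0: "\<And>\<omega>. f \<omega> \<ge> 0" and g0: "\<And>\<omega>. g \<omega> \<ge> 0" and c: "c \<ge> 0"
    and h: "\<And>\<omega>. h \<omega> \<le> c * (f \<omega> / 2 + g \<omega> / 2)"
    and F: "(\<integral>\<^sup>+\<omega>. ennreal (f \<omega>) \<partial>M) \<le> ennreal A"
    and G: "(\<integral>\<^sup>+\<omega>. ennreal (g \<omega>) \<partial>M) \<le> ennreal A"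
  shows "(\<integral>\<^sup>+\<omega>. ennreal (h \<omega>) \<partial>M) \<le> ennreal (c * A)"
proof -
  have "(\<integral>\<^sup>+\<omega>. ennreal (h \<omega>) \<partial>M) \<le> (\<integral>\<^sup>+\<omega>. ennreal (c/2) * ennreal (f \<omega>) + ennreal (c/2) * ennreal (g \<omega>) \<partial>M)"
  proof (intro nn_integral_mono)
    fix \<omega>
    have "ennreal (h \<omega>) \<le> ennreal (c/2 * f \<omega> + c/2 * g \<omega>)"
      using h[of \<omega>] by (intro ennreal_leI) (simp add: algebra_simps)
    also have "\<dots> = ennreal (c/2) * ennreal (f \<omega>) + ennreal (c/2) * ennreal (g \<omega>)"
      using f0[of \<omega>] g0[of \<omega>] c by (simp add: ennreal_plus[symmetric] ennreal_mult[symmetric] del: ennreal_plus)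
    finally show "ennreal (h \<omega>) \<le> \<dots>" .
  qed
  also have "\<dots> = ennreal (c/2) * (\<integral>\<^sup>+\<omega>. ennreal (f \<omega>) \<partial>M) + ennreal (c/2) * (\<integral>\<^sup>+\<omega>. ennreal (g \<omega>) \<partial>M)"
    by (simp add: nn_integral_add nn_integral_cmult)
  also have "\<dots> \<le> ennreal (c/2) * ennreal A + ennreal (c/2) * ennreal A"
    using F G by (intro add_mono mult_left_mono) auto
  also have "\<dots> = ennreal (c * A)"
  proof (cases "A \<ge> 0")
    case True thus ?thesis using c by (simp add: ennreal_mult[symmetric] ennreal_plus[symmetric] del: ennreal_plus)
  next
    case False
    hence "ennreal A = 0" "ennreal (c * A) = 0" using c by (auto simp: ennreal_eq_0_iff mult_nonneg_nonpos)
    thus ?thesis by simp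
  qed
  finally show ?thesis .
qed

lemma integrable_from_nn:
  fixes f :: "'a \<Rightarrow> real"
  assumes "f \<in> borel_measurable M" "\<And>\<omega>. f \<omega> \<ge> 0" "(\<integral>\<^sup>+\<omega>. ennreal (f \<omega>) \<partial>M) \<le> ennreal A"
  shows "integrable M f"
proof (rule integrableI_nonneg)
  have "ennreal A < \<infinity>" by simp
  thus "(\<integral>\<^sup>+\<omega>. ennreal (f \<omega>) \<partial>M) < \<infinity>" using assms(3) by (rule le_less_trans[rotated])
qed (use assms in auto)



lemma part_i:
  fixes M :: "'a measure" and X Y :: "'a \<Rightarrow> real"
  assumes M: "prob_space M" and Xm[measurable]: "X \<in> borel_measurable M"
    and Ym[measurable]: "Y \<in> borel_measurable M"
    and mean0: "integrable M X" "(\<integral>\<omega>. X \<omega> \<partial>M) = 0"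
    and ub: "upexp_bounded M X K"
  shows "(let m = real_cond_exp M (vimage_algebra (space M) Y borel) X;
          \<epsilon> = (\<lambda>\<omega>. X \<omega> - m \<omega>)
      in subgaussian M m \<and> upexp_bounded M m K \<and>
         subgaussian M \<epsilon> \<and> upexp_bounded M \<epsilon> (2 * K))"
proof -
  interpret prob_space M by fact
  obtain K1 K2 K3 K4 where Kpos: "0 < K1" "0 < K2" "0 < K3" "0 < K4"
    and KK: "K > K1" "K > K2" "K > K3" "K > K4"
    and mom: "\<And>q::real. q \<ge> 1 \<Longrightarrow>
          (\<integral>\<^sup>+\<omega>. ennreal (\<bar>X \<omega>\<bar> powr q) \<partial>M) \<le> ennreal ((K2 * sqrt q) powr q)"
    and ex: "(\<integral>\<^sup>+\<omega>. ennreal (exp ((X \<omega>)\<^sup>2 / K3\<^sup>2)) \<partial>M) \<le> ennreal (exp 1)"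
    and mgf: "\<And>t::real. (\<integral>\<^sup>+\<omega>. ennreal (exp (t * X \<omega>)) \<partial>M) \<le> ennreal (exp (t\<^sup>2 * K4\<^sup>2))"
    using ub mean0 unfolding upexp_bounded_def Max4_less by blast
  define F where "F = vimage_algebra (space M) Y borel"
  define m where "m = real_cond_exp M F X"
  define e where "e = (\<lambda>\<omega>. X \<omega> - m \<omega>)"
  have F: "subalgebra M F"
    unfolding subalgebra_def F_def
    by (auto simp: sets_vimage_algebra2 measurable_sets[OF Ym])
  have mm[measurable]: "m \<in> borel_measurable M" unfolding m_def by simp
  have em[measurable]: "e \<in> borel_measurable M" unfolding e_def by simp
  have sqeq: "\<And>x. exp (x\<^sup>2 / K3\<^sup>2) = exp ((1 / K3\<^sup>2) * x\<^sup>2)" by simp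
  have Jex: "(\<integral>\<^sup>+\<omega>. ennreal (exp ((m \<omega>)\<^sup>2 / K3\<^sup>2)) \<partial>M) \<le> ennreal (exp 1)"
  proof -
    have "(\<integral>\<^sup>+\<omega>. ennreal (exp ((1 / K3\<^sup>2) * (m \<omega>)\<^sup>2)) \<partial>M) \<le> (\<integral>\<^sup>+\<omega>. ennreal (exp ((1 / K3\<^sup>2) * (X \<omega>)\<^sup>2)) \<partial>M)"
      unfolding m_def
    proof (rule cond_jensen_nn[OF M F mean0(1)])
      show "convex_on UNIV (\<lambda>x. exp (1 / K3\<^sup>2 * x\<^sup>2))" by (rule convex_exp_sq) simp
      show "integrable M (\<lambda>\<omega>. exp (1 / K3\<^sup>2 * (X \<omega>)\<^sup>2))"
        by (rule integrable_from_nn[where A="exp 1"]) (use ex in auto)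
    qed auto
    thus ?thesis using ex by simp
  qed
  have Jmom: "(\<integral>\<^sup>+\<omega>. ennreal (\<bar>m \<omega>\<bar> powr q) \<partial>M) \<le> ennreal ((K2 * sqrt q) powr q)" if q: "q \<ge> 1" for q :: real
  proof -
    have "(\<integral>\<^sup>+\<omega>. ennreal (\<bar>m \<omega>\<bar> powr q) \<partial>M) \<le> (\<integral>\<^sup>+\<omega>. ennreal (\<bar>X \<omega>\<bar> powr q) \<partial>M)"
      unfolding m_def
    proof (rule cond_jensen_nn[OF M F mean0(1)])
      show "convex_on UNIV (\<lambda>x. \<bar>x\<bar> powr q)" by (rule convex_abs_powr[OF q])
      show "integrable M (\<lambda>\<omega>. \<bar>X \<omega>\<bar> powr q)"
        by (rule integrable_from_nn[where A="(K2 * sqrt q) powr q"]) (use mom[OF q] in auto)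
    qed auto
    thus ?thesis using mom[OF q] by simp
  qed
  have Jmgf: "(\<integral>\<^sup>+\<omega>. ennreal (exp (t * m \<omega>)) \<partial>M) \<le> ennreal (exp (t\<^sup>2 * K4\<^sup>2))" for t :: real
  proof -
    have "(\<integral>\<^sup>+\<omega>. ennreal (exp (t * m \<omega>)) \<partial>M) \<le> (\<integral>\<^sup>+\<omega>. ennreal (exp (t * X \<omega>)) \<partial>M)"
      unfolding m_def
    proof (rule cond_jensen_nn[OF M F mean0(1)])
      show "convex_on UNIV (\<lambda>x. exp (t * x))" by (rule convex_exp_lin)
      show "integrable M (\<lambda>\<omega>. exp (t * X \<omega>))"
        by (rule integrable_from_nn[where A="exp (t\<^sup>2 * K4\<^sup>2)"]) (use mgf[of t] in auto)
    qed auto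
    thus ?thesis using mgf[of t] by simp
  qed
  have tail_m: "measure M {\<omega>\<in>space M. \<bar>m \<omega>\<bar> > t} \<le> exp (1 - t\<^sup>2 / K3\<^sup>2)" if "t \<ge> 0" for t
    by (rule markov_tail[OF M mm Kpos(3) Jex that])
  have sg_m: "subgaussian M m" by (rule subg_from_tail[OF M mm Kpos(3) tail_m])
  have ub_m: "upexp_bounded M m K"
    unfolding upexp_bounded_def Max4_less
    apply (rule exI[of _ K3], rule exI[of _ K2], rule exI[of _ K3], rule exI[of _ K4])
    using Kpos KK tail_m Jmom Jex Jmgf by auto
  have Eex: "(\<integral>\<^sup>+\<omega>. ennreal (exp ((e \<omega>)\<^sup>2 / (2*K3)\<^sup>2)) \<partial>M) \<le> ennreal (exp 1)"
    using nn_avg[where f="\<lambda>\<omega>. exp ((X \<omega>)\<^sup>2 / K3\<^sup>2)" and g="\<lambda>\<omega>. exp ((m \<omega>)\<^sup>2 / K3\<^sup>2)"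
        and c=1 and A="exp 1" and M=M and h="\<lambda>\<omega>. exp ((e \<omega>)\<^sup>2 / (2*K3)\<^sup>2)"]
      ex Jex exp_sq_diff[OF Kpos(3)] unfolding e_def by auto
  have tail_e: "measure M {\<omega>\<in>space M. \<bar>e \<omega>\<bar> > t} \<le> exp (1 - t\<^sup>2 / (2*K3)\<^sup>2)" if "t \<ge> 0" for t
    by (rule markov_tail[OF M em _ Eex that]) (use Kpos in simp)
  have sg_e: "subgaussian M e" by (rule subg_from_tail[OF M em _ tail_e]) (use Kpos in simp)
  have Emom: "(\<integral>\<^sup>+\<omega>. ennreal (\<bar>e \<omega>\<bar> powr q) \<partial>M) \<le> ennreal ((2*K2 * sqrt q) powr q)" if q: "q \<ge> 1" for q :: real
  proof -
    have "(\<integral>\<^sup>+\<omega>. ennreal (\<bar>e \<omega>\<bar> powr q) \<partial>M) \<le> ennreal (2 powr q * (K2 * sqrt q) powr q)"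
      using nn_avg[where f="\<lambda>\<omega>. \<bar>X \<omega>\<bar> powr q" and g="\<lambda>\<omega>. \<bar>m \<omega>\<bar> powr q"
        and c="2 powr q" and A="(K2 * sqrt q) powr q" and M=M and h="\<lambda>\<omega>. \<bar>e \<omega>\<bar> powr q"]
        mom[OF q] Jmom[OF q] powr_diff_bound[OF q] unfolding e_def by auto
    also have "2 powr q * (K2 * sqrt q) powr q = (2*K2 * sqrt q) powr q"
      using Kpos by (simp add: powr_mult)
    finally show ?thesis .
  qed
  have Emgf: "(\<integral>\<^sup>+\<omega>. ennreal (exp (t * e \<omega>)) \<partial>M) \<le> ennreal (exp (t\<^sup>2 * (2*K4)\<^sup>2))" for t :: real
  proof -
    have "(\<integral>\<^sup>+\<omega>. ennreal (exp (t * e \<omega>)) \<partial>M) \<le> ennreal (1 * exp ((2*t)\<^sup>2 * K4\<^sup>2))"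
      using nn_avg[where f="\<lambda>\<omega>. exp (2*t * X \<omega>)" and g="\<lambda>\<omega>. exp (- (2*t) * m \<omega>)"
        and c=1 and A="exp ((2*t)\<^sup>2 * K4\<^sup>2)" and M=M and h="\<lambda>\<omega>. exp (t * e \<omega>)"]
        mgf[of "2*t"] Jmgf[of "-(2*t)"] exp_lin_diff unfolding e_def by auto
    thus ?thesis by (simp add: power_mult_distrib mult_ac)
  qed
  have ub_e: "upexp_bounded M e (2*K)"
    unfolding upexp_bounded_def Max4_less
    apply (rule exI[of _ "2*K3"], rule exI[of _ "2*K2"], rule exI[of _ "2*K3"], rule exI[of _ "2*K4"])
    using Kpos KK tail_e Emom Eex Emgf by auto
  show ?thesis using sg_m ub_m sg_e ub_e unfolding Let_def e_def m_def F_def by simp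
qed



lemma part_ii:
  fixes M :: "'a measure" and X Y :: "'a \<Rightarrow> real" and t0 :: real
    and N :: "real measure" and f :: "real \<times> real \<Rightarrow> ennreal"
  assumes M: "prob_space M"
    and N: "sigma_finite_measure N" "sets N = sets borel"
    and joint: "distributed M (lborel \<Otimes>\<^sub>M N) (\<lambda>\<omega>. (X \<omega>, Y \<omega>)) f"
    and t0: "t0 > 0" "\<forall>t. 0 \<le> t \<and> t \<le> t0 \<longrightarrow>
                 (\<integral>\<^sup>+\<omega>. ennreal (exp (t * (X \<omega>)\<^sup>2)) \<partial>M) \<le> ennreal (exp 1)"
  shows "(let Z = {y. \<exists>t\<in>{0<..t0}. (\<integral>\<^sup>+x. ennreal (exp (t * x\<^sup>2)) * f (x, y) \<partial>lborel) = \<infinity>}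
      in AE \<omega> in M. Y \<omega> \<notin> Z)"
proof -
  interpret prob_space M by fact
  interpret N: sigma_finite_measure N by fact
  interpret P: pair_sigma_finite lborel N ..
  have fm[measurable]: "f \<in> borel_measurable (lborel \<Otimes>\<^sub>M N)"
    using distributed_borel_measurable[OF joint] .
  have XYm[measurable]: "(\<lambda>\<omega>. (X \<omega>, Y \<omega>)) \<in> measurable M (lborel \<Otimes>\<^sub>M N)"
    using distributed_measurable[OF joint] .
  have spN: "space N = UNIV" using sets_eq_imp_space_eq[OF N(2)] by simp
  define h where "h = (\<lambda>p::real\<times>real. ennreal (exp (t0 * (fst p)\<^sup>2)) * f p)"
  have hm[measurable]: "h \<in> borel_measurable (lborel \<Otimes>\<^sub>M N)" unfolding h_def by measurable
  define g where "g = (\<lambda>y. \<integral>\<^sup>+x. h (x, y) \<partial>lborel)"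
  have gm[measurable]: "g \<in> borel_measurable N"
  proof -
    have "(\<lambda>(y, x). h (x, y)) \<in> borel_measurable (N \<Otimes>\<^sub>M lborel)"
      using measurable_pair_swap[OF hm] by simp
    from lborel.borel_measurable_nn_integral_fst[OF this] show ?thesis
      unfolding g_def by simp
  qed
  have "(\<integral>\<^sup>+y. g y \<partial>N) = integral\<^sup>N (lborel \<Otimes>\<^sub>M N) h"
    unfolding g_def by (rule P.nn_integral_snd[OF hm])
  also have "\<dots> = (\<integral>\<^sup>+p. f p * ennreal (exp (t0 * (fst p)\<^sup>2)) \<partial>(lborel \<Otimes>\<^sub>M N))"
    unfolding h_def by (simp add: mult.commute)
  also have "\<dots> = (\<integral>\<^sup>+\<omega>. ennreal (exp (t0 * (fst (X \<omega>, Y \<omega>))\<^sup>2)) \<partial>M)"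
    by (rule distributed_nn_integral[OF joint]) measurable
  also have "\<dots> \<le> ennreal (exp 1)" using t0 by simp
  finally have "(\<integral>\<^sup>+y. g y \<partial>N) \<noteq> \<infinity>" by (auto simp: top_unique)
  hence AEg: "AE y in N. g y \<noteq> \<infinity>" by (intro nn_integral_PInf_AE) auto
  define B where "B = {y\<in>space N. g y = \<infinity>}"
  have Bm[measurable]: "B \<in> sets N" unfolding B_def by measurable
  have "(\<integral>\<^sup>+\<omega>. indicator B (snd (X \<omega>, Y \<omega>)) \<partial>M) = (\<integral>\<^sup>+p. f p * indicator B (snd p) \<partial>(lborel \<Otimes>\<^sub>M N))"
    by (rule distributed_nn_integral[OF joint, symmetric]) measurable
  also have "\<dots> = (\<integral>\<^sup>+y. (\<integral>\<^sup>+x. f (x, y) * indicator B (snd (x, y)) \<partial>lborel) \<partial>N)"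
    by (rule P.nn_integral_snd[symmetric]) measurable
  also have "\<dots> = (\<integral>\<^sup>+y. 0 \<partial>N)"
  proof (rule nn_integral_cong_AE)
    show "AE y in N. (\<integral>\<^sup>+x. f (x, y) * indicator B (snd (x, y)) \<partial>lborel) = 0"
      using AEg by eventually_elim (auto simp: B_def)
  qed
  finally have "(\<integral>\<^sup>+\<omega>. indicator B (Y \<omega>) \<partial>M) = 0" by simp
  hence "AE \<omega> in M. indicator B (Y \<omega>) = (0::ennreal)"
    by (subst (asm) nn_integral_0_iff_AE) auto
  hence AEB: "AE \<omega> in M. Y \<omega> \<notin> B" by eventually_elim (auto simp: indicator_def split: if_splits)
  have sub: "{y. \<exists>t\<in>{0<..t0}. (\<integral>\<^sup>+x. ennreal (exp (t * x\<^sup>2)) * f (x, y) \<partial>lborel) = \<infinity>} \<subseteq> B"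
  proof safe
    fix y t assume t: "t \<in> {0<..t0}" and inf: "(\<integral>\<^sup>+x. ennreal (exp (t * x\<^sup>2)) * f (x, y) \<partial>lborel) = \<infinity>"
    have "(\<integral>\<^sup>+x. ennreal (exp (t * x\<^sup>2)) * f (x, y) \<partial>lborel) \<le> g y"
      unfolding g_def h_def using t
      by (intro nn_integral_mono mult_right_mono ennreal_leI) (auto intro!: mult_right_mono)
    thus "y \<in> B" using inf by (auto simp: B_def spN top_unique)
  qed
  show ?thesis unfolding Let_def using AEB sub by (auto elim!: eventually_mono)
qed



lemma interval_borel:
  fixes S :: "real set" assumes S: "is_interval S"
  shows "S \<in> sets borel"
proof -
  define U where "U = {x. \<exists>a\<in>S. a \<le> x}"
  define D where "D = {x. \<exists>b\<in>S. x \<le> b}"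
  have "S = U \<inter> D" using S unfolding U_def D_def is_interval_1 by auto
  moreover have "U \<in> sets borel"
  proof -
    have "mono (indicator U :: real \<Rightarrow> real)"
      by (auto simp: mono_def indicator_def U_def intro: order_trans)
    hence "(indicator U :: real \<Rightarrow> real) \<in> borel_measurable borel" by (rule borel_measurable_mono)
    thus ?thesis by (simp add: borel_measurable_indicator_iff)
  qed
  moreover have "D \<in> sets borel"
  proof -
    have "mono (\<lambda>x. indicator D (- x) :: real)"
      by (auto simp: mono_def indicator_def D_def) (metis neg_le_iff_le order_trans)
    hence "(\<lambda>x. indicator D (- x) :: real) \<in> borel_measurable borel" by (rule borel_measurable_mono)
    hence "(\<lambda>x. indicator D (- (- x)) :: real) \<in> borel_measurable borel"
      by (rule measurable_compose[rotated]) simp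
    thus ?thesis by (simp add: borel_measurable_indicator_iff)
  qed
  ultimately show ?thesis by simp
qed

lemma cond_nn_le:
  assumes M: "prob_space M" and A: "A \<in> sets M" and p: "p > 0" "measure M A \<ge> p"
    and g[measurable]: "g \<in> borel_measurable M"
  shows "(\<integral>\<^sup>+\<omega>. g \<omega> \<partial>uniform_measure M A) \<le> ennreal (1/p) * (\<integral>\<^sup>+\<omega>. g \<omega> \<partial>M)"
proof -
  interpret prob_space M by fact
  have eA: "emeasure M A = ennreal (measure M A)" by (simp add: emeasure_eq_measure)
  have "(\<integral>\<^sup>+\<omega>. g \<omega> \<partial>uniform_measure M A) = (\<integral>\<^sup>+x. g x * indicator A x \<partial>M) / emeasure M A"
    by (rule nn_integral_uniform_measure) (use A in auto)
  also have "\<dots> = ennreal (1 / measure M A) * (\<integral>\<^sup>+x. g x * indicator A x \<partial>M)"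
    using p unfolding eA by (simp add: divide_ennreal_def ennreal_inverse_positive inverse_eq_divide ennreal_divide_times mult.commute divide_ennreal[symmetric])
  also have "\<dots> \<le> ennreal (1/p) * (\<integral>\<^sup>+\<omega>. g \<omega> \<partial>M)"
  proof (intro mult_mono)
    show "ennreal (1 / measure M A) \<le> ennreal (1 / p)" using p by (intro ennreal_leI) (simp add: frac_le)
    show "(\<integral>\<^sup>+x. g x * indicator A x \<partial>M) \<le> (\<integral>\<^sup>+\<omega>. g \<omega> \<partial>M)"
      by (intro nn_integral_mono) (auto simp: indicator_def)
  qed auto
  finally show ?thesis .
qed

lemma cond_measure_le:
  assumes M: "prob_space M" and A: "A \<in> sets M" and p: "p > 0" "measure M A \<ge> p"
    and B: "B \<in> sets M"
  shows "measure (uniform_measure M A) B \<le> measure M B / p"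
proof -
  interpret prob_space M by fact
  have "measure M A > 0" using p by simp
  hence ne: "emeasure M A \<noteq> 0" by (simp add: emeasure_eq_measure)
  have "measure (uniform_measure M A) B = measure M (A \<inter> B) / measure M A"
    by (rule measure_uniform_measure) (use ne B in auto)
  also have "\<dots> \<le> measure M B / measure M A"
    using \<open>measure M A > 0\<close> by (intro divide_right_mono finite_measure_mono) (auto simp: B)
  also have "\<dots> \<le> measure M B / p" using p by (intro divide_left_mono) auto
  finally show ?thesis .
qed

lemma centered_bound:
  fixes x \<mu> l :: real
  shows "(x - \<mu>)\<^sup>2 * exp (\<bar>l\<bar> * \<bar>x - \<mu>\<bar>) \<le>
           4 * (x\<^sup>2 * exp (2 * \<bar>l\<bar> * \<bar>x\<bar>) + \<mu>\<^sup>2 * exp (2 * \<bar>l\<bar> * \<bar>\<mu>\<bar>))"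
proof -
  define w where "w = max \<bar>x\<bar> \<bar>\<mu>\<bar>"
  have w0: "w \<ge> 0" by (simp add: w_def)
  have d: "\<bar>x - \<mu>\<bar> \<le> 2 * w" unfolding w_def by linarith
  have "(x - \<mu>)\<^sup>2 = \<bar>x - \<mu>\<bar>\<^sup>2" by simp
  also have "\<dots> \<le> (2 * w)\<^sup>2" using d by (intro power_mono) auto
  finally have s: "(x - \<mu>)\<^sup>2 \<le> 4 * w\<^sup>2" by (simp add: power_mult_distrib)
  have e: "exp (\<bar>l\<bar> * \<bar>x - \<mu>\<bar>) \<le> exp (2 * \<bar>l\<bar> * w)"
    using mult_left_mono[OF d, of "\<bar>l\<bar>"] by (simp add: mult_ac)
  have "(x - \<mu>)\<^sup>2 * exp (\<bar>l\<bar> * \<bar>x - \<mu>\<bar>) \<le> (4 * w\<^sup>2) * exp (2 * \<bar>l\<bar> * w)"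
    using s e by (intro mult_mono) auto
  also have "w\<^sup>2 * exp (2 * \<bar>l\<bar> * w) \<le> x\<^sup>2 * exp (2 * \<bar>l\<bar> * \<bar>x\<bar>) + \<mu>\<^sup>2 * exp (2 * \<bar>l\<bar> * \<bar>\<mu>\<bar>)"
  proof (cases "\<bar>x\<bar> \<le> \<bar>\<mu>\<bar>")
    case True
    hence "w = \<bar>\<mu>\<bar>" by (simp add: w_def)
    thus ?thesis by simp
  next
    case False
    hence "w = \<bar>x\<bar>" by (simp add: w_def)
    thus ?thesis by simp
  qed
  hence "(4 * w\<^sup>2) * exp (2 * \<bar>l\<bar> * w) \<le> 4 * (x\<^sup>2 * exp (2 * \<bar>l\<bar> * \<bar>x\<bar>) + \<mu>\<^sup>2 * exp (2 * \<bar>l\<bar> * \<bar>\<mu>\<bar>))"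
    by simp
  finally show ?thesis .
qed

lemma chernoff_indep:
  fixes Z :: "'i \<Rightarrow> 'b \<Rightarrow> real"
  assumes P: "prob_space P" and I: "finite I" and ind: "prob_space.indep_vars P (\<lambda>_. borel) Z I"
    and l: "l > 0"
    and B: "\<And>i. i \<in> I \<Longrightarrow> (\<integral>\<^sup>+\<omega>. ennreal (exp (l * Z i \<omega>)) \<partial>P) \<le> ennreal (exp (l\<^sup>2 * s))"
  shows "measure P {\<omega>\<in>space P. (\<Sum>i\<in>I. Z i \<omega>) \<ge> a} \<le> exp (real (card I) * l\<^sup>2 * s - l * a)"
proof -
  interpret prob_space P by fact
  have rv[measurable]: "\<And>i. i \<in> I \<Longrightarrow> Z i \<in> borel_measurable P"
    using ind unfolding indep_vars_def by auto
  have sm[measurable]: "(\<lambda>\<omega>. \<Sum>i\<in>I. Z i \<omega>) \<in> borel_measurable P"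
    by (intro borel_measurable_sum rv)
  have "emeasure P {\<omega>\<in>space P. (\<Sum>i\<in>I. Z i \<omega>) \<ge> a} \<le>
        ennreal (exp (-l * a)) * (\<integral>\<^sup>+\<omega>. ennreal (exp (l * (\<Sum>i\<in>I. Z i \<omega>))) * indicator (space P) \<omega> \<partial>P)"
    by (rule Chernoff_ineq_nn_integral_ge[OF l]) auto
  also have "(\<integral>\<^sup>+\<omega>. ennreal (exp (l * (\<Sum>i\<in>I. Z i \<omega>))) * indicator (space P) \<omega> \<partial>P) =
             (\<integral>\<^sup>+\<omega>. (\<Prod>i\<in>I. ennreal (exp (l * Z i \<omega>))) \<partial>P)"
    by (intro nn_integral_cong)
       (simp_all add: sum_distrib_left exp_sum I prod_ennreal)
  also have "\<dots> = (\<Prod>i\<in>I. \<integral>\<^sup>+\<omega>. ennreal (exp (l * Z i \<omega>)) \<partial>P)"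
    by (intro indep_vars_nn_integral I indep_vars_compose2[OF ind]) auto
  also have "ennreal (exp (-l * a)) * \<dots> \<le> ennreal (exp (-l * a)) * (\<Prod>i\<in>I. ennreal (exp (l\<^sup>2 * s)))"
    by (intro mult_left_mono prod_mono_ennreal B) auto
  also have "\<dots> = ennreal (exp (real (card I) * l\<^sup>2 * s - l * a))"
  proof -
    have "(\<Prod>i\<in>I. ennreal (exp (l\<^sup>2 * s))) = ennreal (exp (real (card I) * (l\<^sup>2 * s)))"
      by (simp add: exp_of_nat_mult ennreal_power)
    hence "ennreal (exp (-l * a)) * (\<Prod>i\<in>I. ennreal (exp (l\<^sup>2 * s))) =
           ennreal (exp (-l * a) * exp (real (card I) * (l\<^sup>2 * s)))"
      by (simp add: ennreal_mult)
    also have "exp (-l * a) * exp (real (card I) * (l\<^sup>2 * s)) = exp (real (card I) * l\<^sup>2 * s - l * a)"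
      by (simp add: exp_add[symmetric] algebra_simps)
    finally show ?thesis .
  qed
  finally show ?thesis by (simp add: emeasure_eq_measure)
qed



lemma mgf_cond:
  fixes M :: "'a measure" and X :: "'a \<Rightarrow> real"
  assumes M: "prob_space M" and A: "A \<in> sets M" and p: "p > 0" "measure M A \<ge> p"
    and Xm[measurable]: "X \<in> borel_measurable M" and k: "k > 0"
    and ex: "(\<integral>\<^sup>+\<omega>. ennreal (exp ((X \<omega>)\<^sup>2 / k\<^sup>2)) \<partial>M) \<le> ennreal (exp 1)"
    and l: "\<bar>l\<bar> \<le> 1 / k"
  shows "(\<integral>\<^sup>+\<omega>. ennreal (exp (l * (X \<omega> - (\<integral>\<omega>'. X \<omega>' \<partial>uniform_measure M A)))) \<partial>uniform_measure M A)
           \<le> ennreal (exp (l\<^sup>2 * (8 * exp 3 * k\<^sup>2 / p)))"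
proof -
  interpret prob_space M by fact
  define Q where "Q = uniform_measure M A"
  have mA: "measure M A > 0" using p by simp
  have eA: "emeasure M A \<noteq> 0" "emeasure M A \<noteq> \<infinity>" using mA by (auto simp: emeasure_eq_measure)
  interpret Q: prob_space Q unfolding Q_def by (rule prob_space_uniform_measure[OF eA])
  have sQ: "sets Q = sets M" and spQ[simp]: "space Q = space M" by (auto simp: Q_def)
  have XQ[measurable]: "X \<in> borel_measurable Q" by (simp add: measurable_cong_sets[OF sQ refl])
  define G where "G = (\<lambda>x::real. x\<^sup>2 * exp (2 * \<bar>l\<bar> * \<bar>x\<bar>))"
  have G0: "\<And>x. G x \<ge> 0" by (simp add: G_def)
  have Gm[measurable]: "G \<in> borel_measurable borel" unfolding G_def by measurable
  define \<gamma> where "\<gamma> = 2 * exp 3 * k\<^sup>2 / p"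
  have EGM: "(\<integral>\<^sup>+\<omega>. ennreal (G (X \<omega>)) \<partial>M) \<le> ennreal (2 * exp 2 * k\<^sup>2) * ennreal (exp 1)"
  proof -
    have "(\<integral>\<^sup>+\<omega>. ennreal (G (X \<omega>)) \<partial>M) \<le> (\<integral>\<^sup>+\<omega>. ennreal (2 * exp 2 * k\<^sup>2) * ennreal (exp ((X \<omega>)\<^sup>2 / k\<^sup>2)) \<partial>M)"
      unfolding G_def using sq_exp_bound[OF k l]
      by (intro nn_integral_mono) (simp add: ennreal_mult[symmetric] ennreal_leI)
    also have "\<dots> = ennreal (2 * exp 2 * k\<^sup>2) * (\<integral>\<^sup>+\<omega>. ennreal (exp ((X \<omega>)\<^sup>2 / k\<^sup>2)) \<partial>M)"
      by (rule nn_integral_cmult) measurable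
    also have "\<dots> \<le> ennreal (2 * exp 2 * k\<^sup>2) * ennreal (exp 1)"
      using ex by (intro mult_left_mono) auto
    finally show ?thesis .
  qed
  have EGQ: "(\<integral>\<^sup>+\<omega>. ennreal (G (X \<omega>)) \<partial>Q) \<le> ennreal \<gamma>"
  proof -
    have "(\<integral>\<^sup>+\<omega>. ennreal (G (X \<omega>)) \<partial>Q) \<le> ennreal (1/p) * (\<integral>\<^sup>+\<omega>. ennreal (G (X \<omega>)) \<partial>M)"
      unfolding Q_def by (rule cond_nn_le[OF M A p]) measurable
    also have "\<dots> \<le> ennreal (1/p) * (ennreal (2 * exp 2 * k\<^sup>2) * ennreal (exp 1))"
      using EGM by (intro mult_left_mono) auto
    also have "\<dots> = ennreal \<gamma>"
      using p by (simp add: \<gamma>_def ennreal_mult[symmetric] exp_add[symmetric])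
    finally show ?thesis .
  qed
  have intG: "integrable Q (\<lambda>\<omega>. G (X \<omega>))"
    by (rule integrable_from_nn[OF _ _ EGQ]) (auto simp: G0)
  have IG: "(\<integral>\<omega>. G (X \<omega>) \<partial>Q) \<le> \<gamma>"
  proof -
    have "ennreal (\<integral>\<omega>. G (X \<omega>) \<partial>Q) = (\<integral>\<^sup>+\<omega>. ennreal (G (X \<omega>)) \<partial>Q)"
      by (rule nn_integral_eq_integral[symmetric]) (use intG G0 in auto)
    with EGQ have "ennreal (\<integral>\<omega>. G (X \<omega>) \<partial>Q) \<le> ennreal \<gamma>" by simp
    moreover have "\<gamma> \<ge> 0" using p by (simp add: \<gamma>_def)
    ultimately show ?thesis by (simp add: ennreal_le_iff)
  qed
  have intX: "integrable Q X"
  proof (rule Bochner_Integration.integrable_bound[where f="\<lambda>\<omega>. 1 + G (X \<omega>)"])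
    show "integrable Q (\<lambda>\<omega>. 1 + G (X \<omega>))" using intG by simp
    show "AE \<omega> in Q. norm (X \<omega>) \<le> norm (1 + G (X \<omega>))"
    proof (intro AE_I2)
      fix \<omega>
      have "\<bar>X \<omega>\<bar> \<le> 1 + (X \<omega>)\<^sup>2"
      proof -
        have "0 \<le> (\<bar>X \<omega>\<bar> - 1)\<^sup>2" by simp
        hence "2 * \<bar>X \<omega>\<bar> \<le> 1 + \<bar>X \<omega>\<bar>\<^sup>2" by (simp add: power2_eq_square algebra_simps)
        thus ?thesis by simp
      qed
      also have "(X \<omega>)\<^sup>2 \<le> G (X \<omega>)" unfolding G_def by (simp add: mult_le_cancel_left1)
      finally show "norm (X \<omega>) \<le> norm (1 + G (X \<omega>))" using G0[of "X \<omega>"] by simp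
    qed
  qed simp
  define \<mu> where "\<mu> = (\<integral>\<omega>. X \<omega> \<partial>Q)"
  have Jen: "G \<mu> \<le> (\<integral>\<omega>. G (X \<omega>) \<partial>Q)"
    unfolding \<mu>_def
    by (rule Q.jensens_inequality[where I=UNIV]) (use intX intG convex_sq_exp_abs[of "\<bar>l\<bar>"] in \<open>auto simp: G_def\<close>)
  define R where "R = (\<lambda>\<omega>. 1 + l * (X \<omega> - \<mu>) + 2 * l\<^sup>2 * (G (X \<omega>) + G \<mu>))"
  have pw: "exp (l * (X \<omega> - \<mu>)) \<le> R \<omega>" for \<omega>
  proof -
    define u where "u = l * (X \<omega> - \<mu>)"
    have "exp u \<le> 1 + u + u\<^sup>2 / 2 * exp \<bar>u\<bar>" by (rule exp_taylor2)
    also have "u\<^sup>2 / 2 * exp \<bar>u\<bar> = l\<^sup>2 / 2 * ((X \<omega> - \<mu>)\<^sup>2 * exp (\<bar>l\<bar> * \<bar>X \<omega> - \<mu>\<bar>))"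
      by (simp add: u_def power_mult_distrib abs_mult)
    also have "\<dots> \<le> l\<^sup>2 / 2 * (4 * (G (X \<omega>) + G \<mu>))"
      unfolding G_def by (intro mult_left_mono centered_bound) auto
    finally show ?thesis by (simp add: R_def u_def algebra_simps)
  qed
  have intR: "integrable Q R" unfolding R_def using intX intG by auto
  have intE: "integrable Q (\<lambda>\<omega>. exp (l * (X \<omega> - \<mu>)))"
  proof (rule Bochner_Integration.integrable_bound[OF intR])
    show "AE \<omega> in Q. norm (exp (l * (X \<omega> - \<mu>))) \<le> norm (R \<omega>)"
    proof (intro AE_I2)
      fix \<omega>
      have "norm (exp (l * (X \<omega> - \<mu>))) = exp (l * (X \<omega> - \<mu>))" by simp
      also have "\<dots> \<le> R \<omega>" by (rule pw)
      also have "\<dots> \<le> norm (R \<omega>)" by simp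
      finally show "norm (exp (l * (X \<omega> - \<mu>))) \<le> norm (R \<omega>)" .
    qed
  qed simp
  have "(\<integral>\<omega>. exp (l * (X \<omega> - \<mu>)) \<partial>Q) \<le> (\<integral>\<omega>. R \<omega> \<partial>Q)"
    by (intro integral_mono intE intR pw)
  also have "(\<integral>\<omega>. R \<omega> \<partial>Q) = 1 + l * ((\<integral>\<omega>. X \<omega> \<partial>Q) - \<mu>) + 2 * l\<^sup>2 * ((\<integral>\<omega>. G (X \<omega>) \<partial>Q) + G \<mu>)"
    unfolding R_def using intX intG Q.prob_space by simp
  also have "\<dots> \<le> 1 + 4 * l\<^sup>2 * \<gamma>"
  proof -
    have "(\<integral>\<omega>. G (X \<omega>) \<partial>Q) + G \<mu> \<le> 2 * \<gamma>" using Jen IG by simp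
    hence "2 * l\<^sup>2 * ((\<integral>\<omega>. G (X \<omega>) \<partial>Q) + G \<mu>) \<le> 2 * l\<^sup>2 * (2 * \<gamma>)"
      by (intro mult_left_mono) auto
    thus ?thesis by (simp add: \<mu>_def)
  qed
  also have "\<dots> \<le> exp (4 * l\<^sup>2 * \<gamma>)" by (rule exp_ge_add_one_self[THEN order_trans[rotated]]) simp
  also have "4 * l\<^sup>2 * \<gamma> = l\<^sup>2 * (8 * exp 3 * k\<^sup>2 / p)" by (simp add: \<gamma>_def)
  finally have I: "(\<integral>\<omega>. exp (l * (X \<omega> - \<mu>)) \<partial>Q) \<le> exp (l\<^sup>2 * (8 * exp 3 * k\<^sup>2 / p))" .
  have "(\<integral>\<^sup>+\<omega>. ennreal (exp (l * (X \<omega> - \<mu>))) \<partial>Q) = ennreal (\<integral>\<omega>. exp (l * (X \<omega> - \<mu>)) \<partial>Q)"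
    by (rule nn_integral_eq_integral[OF intE]) simp
  also have "\<dots> \<le> ennreal (exp (l\<^sup>2 * (8 * exp 3 * k\<^sup>2 / p)))" using I by (rule ennreal_leI)
  finally show ?thesis unfolding Q_def \<mu>_def .
qed



lemma bern_arith:
  fixes c t K D s :: real
  assumes c: "c \<ge> 0" and t: "t > 0" and K: "K > 0" and D: "D > 0" and s: "s \<le> D / 2"
  shows "c * (t / (D + t*K))\<^sup>2 * s - (t / (D + t*K)) * (c * t) \<le> - (c * t\<^sup>2) / (2 * D + 2 * t * K)"
proof -
  define S where "S = D + t * K"
  have "t * K > 0" using t K by simp
  hence S: "S > 0" using D by (simp add: S_def)
  have "c * (t / S)\<^sup>2 * s \<le> c * (t / S)\<^sup>2 * (D / 2)" using c s by (intro mult_left_mono) auto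
  moreover have "c * (t / S)\<^sup>2 * (D / 2) - (t / S) * (c * t) + (c * t\<^sup>2) / (2 * S) = - (c * t^3 * K) / (2 * S\<^sup>2)"
  proof -
    have DS: "D = S - t * K" by (simp add: S_def)
    show ?thesis unfolding DS using S by (simp add: field_simps power2_eq_square power3_eq_cube)
  qed
  moreover have "- (c * t^3 * K) / (2 * S\<^sup>2) \<le> 0" using c t K S by (simp add: divide_nonpos_pos)
  moreover have "2 * D + 2 * t * K = 2 * S" by (simp add: S_def)
  ultimately show ?thesis unfolding S_def[symmetric] by (smt (verit) minus_divide_left)
qed

lemma bern_part:
  fixes Q :: "'a measure" and X :: "'a \<Rightarrow> real" and P :: "'b measure" and Xs :: "nat \<Rightarrow> 'b \<Rightarrow> real"
  assumes P: "prob_space P" and c: "c \<ge> 1" and t: "t > 0"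
    and ind: "prob_space.indep_vars P (\<lambda>_. borel) Xs {..<c}"
    and dis: "\<forall>i<c. distr P borel (Xs i) = distr Q borel X"
    and Xm[measurable]: "X \<in> borel_measurable Q"
    and K: "K > 0" and D: "D > 0" and s: "s \<le> D / 2"
    and mgf: "\<And>l. \<bar>l\<bar> \<le> 1 / K \<Longrightarrow> (\<integral>\<^sup>+\<omega>. ennreal (exp (l * (X \<omega> - \<mu>))) \<partial>Q) \<le> ennreal (exp (l\<^sup>2 * s))"
  shows "measure P {\<omega>\<in>space P. \<bar>(\<Sum>i<c. Xs i \<omega>) / real c - \<mu>\<bar> > t}
           \<le> 2 * exp (- (real c * t\<^sup>2) / (2 * D + 2 * t * K))"
proof -
  interpret prob_space P by fact
  have rv[measurable]: "\<And>i. i \<in> {..<c} \<Longrightarrow> Xs i \<in> borel_measurable P"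
    using ind unfolding indep_vars_def by auto
  define l where "l = t / (D + t * K)"
  have "t * K > 0" using t K by simp
  hence "D + t * K > 0" using D by simp
  hence l0: "l > 0" using t by (simp add: l_def)
  have l1: "l \<le> 1 / K"
  proof -
    have p: "D + t * K > 0" using D t K by (simp add: add_pos_pos)
    have "t * K \<le> D + t * K" using D by simp
    thus ?thesis unfolding l_def using p D t K by (simp add: divide_le_eq field_simps)
  qed
  have mgfP: "(\<integral>\<^sup>+\<omega>. ennreal (exp (l' * (Xs i \<omega> - \<mu>))) \<partial>P) \<le> ennreal (exp (l'\<^sup>2 * s))"
    if i: "i < c" and l': "\<bar>l'\<bar> \<le> 1 / K" for i l'
  proof -
    have [measurable]: "Xs i \<in> borel_measurable P" using rv i by simp
    have "(\<integral>\<^sup>+\<omega>. ennreal (exp (l' * (Xs i \<omega> - \<mu>))) \<partial>P) = (\<integral>\<^sup>+x. ennreal (exp (l' * (x - \<mu>))) \<partial>distr P borel (Xs i))"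
      by (rule nn_integral_distr[symmetric]) auto
    also have "\<dots> = (\<integral>\<^sup>+x. ennreal (exp (l' * (x - \<mu>))) \<partial>distr Q borel X)" using dis i by simp
    also have "\<dots> = (\<integral>\<^sup>+\<omega>. ennreal (exp (l' * (X \<omega> - \<mu>))) \<partial>Q)"
      by (rule nn_integral_distr) auto
    also have "\<dots> \<le> ennreal (exp (l'\<^sup>2 * s))" by (rule mgf[OF l'])
    finally show ?thesis .
  qed
  have ch1: "measure P {\<omega>\<in>space P. (\<Sum>i\<in>{..<c}. Xs i \<omega> - \<mu>) \<ge> real c * t} \<le> exp (real (card {..<c}) * l\<^sup>2 * s - l * (real c * t))"
  proof (rule chernoff_indep[OF P _ _ l0])
    show "prob_space.indep_vars P (\<lambda>_. borel) (\<lambda>i \<omega>. Xs i \<omega> - \<mu>) {..<c}"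
      by (rule indep_vars_compose2[OF ind, where Y="\<lambda>i x. x - \<mu>", simplified]) simp
    show "\<And>i. i \<in> {..<c} \<Longrightarrow> (\<integral>\<^sup>+\<omega>. ennreal (exp (l * (Xs i \<omega> - \<mu>))) \<partial>P) \<le> ennreal (exp (l\<^sup>2 * s))"
      using mgfP l0 l1 by auto
  qed auto
  have ch2: "measure P {\<omega>\<in>space P. (\<Sum>i\<in>{..<c}. \<mu> - Xs i \<omega>) \<ge> real c * t} \<le> exp (real (card {..<c}) * l\<^sup>2 * s - l * (real c * t))"
  proof (rule chernoff_indep[OF P _ _ l0])
    show "prob_space.indep_vars P (\<lambda>_. borel) (\<lambda>i \<omega>. \<mu> - Xs i \<omega>) {..<c}"
      by (rule indep_vars_compose2[OF ind, where Y="\<lambda>i x. \<mu> - x", simplified]) simp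
    show "(\<integral>\<^sup>+\<omega>. ennreal (exp (l * (\<mu> - Xs i \<omega>))) \<partial>P) \<le> ennreal (exp (l\<^sup>2 * s))" if "i \<in> {..<c}" for i
      using mgfP[of i "-l"] that l0 l1 by (simp add: algebra_simps)
  qed auto
  have sub: "{\<omega>\<in>space P. \<bar>(\<Sum>i<c. Xs i \<omega>) / real c - \<mu>\<bar> > t} \<subseteq>
     {\<omega>\<in>space P. (\<Sum>i\<in>{..<c}. Xs i \<omega> - \<mu>) \<ge> real c * t} \<union> {\<omega>\<in>space P. (\<Sum>i\<in>{..<c}. \<mu> - Xs i \<omega>) \<ge> real c * t}"
  proof safe
    fix \<omega> assume "\<omega> \<in> space P" and gt: "\<bar>(\<Sum>i<c. Xs i \<omega>) / real c - \<mu>\<bar> > t"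
      and n: "\<not> real c * t \<le> (\<Sum>i\<in>{..<c}. \<mu> - Xs i \<omega>)"
    have cpos: "real c > 0" using c by simp
    have e1: "(\<Sum>i\<in>{..<c}. Xs i \<omega> - \<mu>) = real c * ((\<Sum>i<c. Xs i \<omega>) / real c - \<mu>)"
      using cpos by (simp add: sum_subtractf field_simps)
    have e2: "(\<Sum>i\<in>{..<c}. \<mu> - Xs i \<omega>) = - (real c * ((\<Sum>i<c. Xs i \<omega>) / real c - \<mu>))"
      using cpos by (simp add: sum_subtractf field_simps)
    show "real c * t \<le> (\<Sum>i\<in>{..<c}. Xs i \<omega> - \<mu>)"
    proof (cases "(\<Sum>i<c. Xs i \<omega>) / real c - \<mu> \<ge> 0")
      case True
      hence "t \<le> (\<Sum>i<c. Xs i \<omega>) / real c - \<mu>" using gt by simp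
      thus ?thesis unfolding e1 using cpos by (intro mult_left_mono) auto
    next
      case False
      hence "t \<le> - ((\<Sum>i<c. Xs i \<omega>) / real c - \<mu>)" using gt by simp
      hence "real c * t \<le> real c * (- ((\<Sum>i<c. Xs i \<omega>) / real c - \<mu>))" using cpos by (intro mult_left_mono) auto
      hence False using n unfolding e2 by (simp add: algebra_simps)
      thus ?thesis ..
    qed
  qed
  have "measure P {\<omega>\<in>space P. \<bar>(\<Sum>i<c. Xs i \<omega>) / real c - \<mu>\<bar> > t} \<le>
     measure P ({\<omega>\<in>space P. (\<Sum>i\<in>{..<c}. Xs i \<omega> - \<mu>) \<ge> real c * t} \<union> {\<omega>\<in>space P. (\<Sum>i\<in>{..<c}. \<mu> - Xs i \<omega>) \<ge> real c * t})"
    using sub by (intro finite_measure_mono) auto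
  also have "\<dots> \<le> measure P {\<omega>\<in>space P. (\<Sum>i\<in>{..<c}. Xs i \<omega> - \<mu>) \<ge> real c * t} + measure P {\<omega>\<in>space P. (\<Sum>i\<in>{..<c}. \<mu> - Xs i \<omega>) \<ge> real c * t}"
    by (intro measure_Un_le) auto
  also have "\<dots> \<le> exp (real c * l\<^sup>2 * s - l * (real c * t)) + exp (real c * l\<^sup>2 * s - l * (real c * t))"
    using ch1 ch2 by simp
  also have "\<dots> \<le> 2 * exp (- (real c * t\<^sup>2) / (2 * D + 2 * t * K))"
    using bern_arith[of "real c" t K D s] t K D s unfolding l_def by simp
  finally show ?thesis .
qed



lemma part_iii:
  fixes M :: "'a measure" and X Y :: "'a \<Rightarrow> real" and K C1 C2 :: real
  assumes M: "prob_space M" and Xm[measurable]: "X \<in> borel_measurable M"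
    and Ym[measurable]: "Y \<in> borel_measurable M"
    and mean0: "integrable M X" "(\<integral>\<omega>. X \<omega> \<partial>M) = 0"
    and ub: "upexp_bounded M X K" and C1: "0 < C1"
  shows "(\<exists>C. \<forall>H S. interval_partition H S \<and>
              (\<forall>h\<in>{1..H}. C1 / real H \<le> measure M {\<omega>\<in>space M. Y \<omega> \<in> S h} \<and>
                           measure M {\<omega>\<in>space M. Y \<omega> \<in> S h} \<le> C2 / real H) \<longrightarrow>
            (\<forall>h\<in>{1..H}. \<forall>t\<ge>0.
               measure (cond_on M Y (S h)) {\<omega>\<in>space M. X \<omega> > t}
                 \<le> C * real H * exp (1 - t\<^sup>2 / K\<^sup>2)))
      \<and>
      (\<exists>C>0. \<forall>H S. interval_partition H S \<and>
              (\<forall>h\<in>{1..H}. C1 / real H \<le> measure M {\<omega>\<in>space M. Y \<omega> \<in> S h} \<and>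
                           measure M {\<omega>\<in>space M. Y \<omega> \<in> S h} \<le> C2 / real H) \<longrightarrow>
            (\<forall>h\<in>{1..H}.
               (\<integral>\<^sup>+\<omega>. ennreal (exp ((X \<omega>)\<^sup>2 / (2 * K\<^sup>2))) \<partial>cond_on M Y (S h))
                  \<le> ennreal (C * real H)
             \<and> (\<forall>m::nat. m \<ge> 1 \<longrightarrow>
                  (\<integral>\<^sup>+\<omega>. ennreal (\<bar>X \<omega>\<bar> ^ m) \<partial>cond_on M Y (S h))
                  \<le> ennreal (C * real H * real m * K ^ m * Gamma (real m / 2) / 2))
             \<and> (\<forall>(P :: 'b measure) (Xs :: nat \<Rightarrow> 'b \<Rightarrow> real) (c::nat) (t::real).
                  prob_space P \<and> c \<ge> 1 \<and> t > 0 \<and>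
                  prob_space.indep_vars P (\<lambda>_. borel) Xs {..<c} \<and>
                  (\<forall>i<c. distr P borel (Xs i) = distr (cond_on M Y (S h)) borel X) \<longrightarrow>
                  measure P {\<omega>\<in>space P.
                     \<bar>(\<Sum>i<c. Xs i \<omega>) / real c - (\<integral>\<omega>'. X \<omega>' \<partial>cond_on M Y (S h))\<bar> > t}
                  \<le> 2 * exp (- (real c * t\<^sup>2) / (2 * C * real H * K\<^sup>2 + 2 * t * K)))))"
proof -
  interpret prob_space M by fact
  obtain K1 K2 K3 K4 where Kpos: "0 < K1" "0 < K2" "0 < K3" "0 < K4"
    and KK: "K > K1" "K > K2" "K > K3" "K > K4"
    and tail: "\<And>t. t \<ge> 0 \<Longrightarrow> measure M {\<omega>\<in>space M. \<bar>X \<omega>\<bar> > t} \<le> exp (1 - t\<^sup>2 / K1\<^sup>2)"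
    and ex: "(\<integral>\<^sup>+\<omega>. ennreal (exp ((X \<omega>)\<^sup>2 / K3\<^sup>2)) \<partial>M) \<le> ennreal (exp 1)"
    using ub mean0 unfolding upexp_bounded_def Max4_less by blast
  have K0: "K > 0" using Kpos KK by simp
  have stp: "A \<in> sets M \<and> C1 / real H > 0 \<and> measure M A \<ge> C1 / real H \<and> 1 / (C1 / real H) = real H / C1
     \<and> cond_on M Y (S h) = uniform_measure M A"
    if "interval_partition H S" "h \<in> {1..H}" "C1 / real H \<le> measure M {\<omega>\<in>space M. Y \<omega> \<in> S h}"
       "A = {\<omega>\<in>space M. Y \<omega> \<in> S h}" for H S h A
  proof -
    have H: "H \<ge> 1" and iv: "is_interval (S h)" using that(1,2) unfolding interval_partition_def by auto
    have [measurable]: "S h \<in> sets borel" by (rule interval_borel[OF iv])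
    have "A \<in> sets M" unfolding that(4) by measurable
    moreover have "C1 / real H > 0" using C1 H by simp
    ultimately show ?thesis using that(3,4) C1 H by (simp add: cond_on_def)
  qed
  define Ca where "Ca = 1 / C1"
  define Cb where "Cb = 16 * exp 3 / C1"
  have Cb0: "Cb > 0" using C1 by (simp add: Cb_def)
  have eCb: "exp 1 / C1 \<le> Cb"
  proof -
    have "exp 1 \<le> 16 * exp (3::real)" by (smt (verit) exp_gt_zero exp_le_cancel_iff)
    thus ?thesis unfolding Cb_def using C1 by (simp add: divide_right_mono)
  qed
  have part1: "\<forall>H S. interval_partition H S \<and>
              (\<forall>h\<in>{1..H}. C1 / real H \<le> measure M {\<omega>\<in>space M. Y \<omega> \<in> S h} \<and>
                           measure M {\<omega>\<in>space M. Y \<omega> \<in> S h} \<le> C2 / real H) \<longrightarrow>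
            (\<forall>h\<in>{1..H}. \<forall>t\<ge>0.
               measure (cond_on M Y (S h)) {\<omega>\<in>space M. X \<omega> > t}
                 \<le> Ca * real H * exp (1 - t\<^sup>2 / K\<^sup>2))"
  proof (intro allI impI ballI)
    fix H S h and t :: real
    assume HS: "interval_partition H S \<and> (\<forall>h\<in>{1..H}. C1 / real H \<le> measure M {\<omega>\<in>space M. Y \<omega> \<in> S h} \<and>
                           measure M {\<omega>\<in>space M. Y \<omega> \<in> S h} \<le> C2 / real H)"
      and h: "h \<in> {1..H}" and t: "t \<ge> 0"
    define A where "A = {\<omega>\<in>space M. Y \<omega> \<in> S h}"
    note st = stp[of H S h A, OF _ h _ A_def] 
    have A: "A \<in> sets M" and p: "C1 / real H > 0" "measure M A \<ge> C1 / real H"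
      and ip: "1 / (C1 / real H) = real H / C1" and cq: "cond_on M Y (S h) = uniform_measure M A"
      using st HS h A_def by auto
    have "measure (cond_on M Y (S h)) {\<omega>\<in>space M. X \<omega> > t} \<le> measure M {\<omega>\<in>space M. X \<omega> > t} / (C1 / real H)"
      unfolding cq by (rule cond_measure_le[OF M A p]) measurable
    also have "\<dots> \<le> measure M {\<omega>\<in>space M. \<bar>X \<omega>\<bar> > t} / (C1 / real H)"
      using p by (intro divide_right_mono finite_measure_mono) auto
    also have "\<dots> \<le> exp (1 - t\<^sup>2 / K1\<^sup>2) / (C1 / real H)"
      using p tail[OF t] by (intro divide_right_mono) auto
    also have "exp (1 - t\<^sup>2 / K1\<^sup>2) \<le> exp (1 - t\<^sup>2 / K\<^sup>2)"
    proof -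
      have "K1\<^sup>2 \<le> K\<^sup>2" using Kpos KK by (intro power_mono) auto
      hence "t\<^sup>2 / K\<^sup>2 \<le> t\<^sup>2 / K1\<^sup>2" using Kpos K0 by (intro divide_left_mono) auto
      thus ?thesis by simp
    qed
    hence "exp (1 - t\<^sup>2 / K1\<^sup>2) / (C1 / real H) \<le> exp (1 - t\<^sup>2 / K\<^sup>2) / (C1 / real H)"
      using p by (intro divide_right_mono) auto
    also have "\<dots> = Ca * real H * exp (1 - t\<^sup>2 / K\<^sup>2)"
      using p C1 by (simp add: Ca_def field_simps)
    finally show "measure (cond_on M Y (S h)) {\<omega>\<in>space M. X \<omega> > t} \<le> Ca * real H * exp (1 - t\<^sup>2 / K\<^sup>2)" .
  qed
  have part2: "\<forall>H S. interval_partition H S \<and>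
              (\<forall>h\<in>{1..H}. C1 / real H \<le> measure M {\<omega>\<in>space M. Y \<omega> \<in> S h} \<and>
                           measure M {\<omega>\<in>space M. Y \<omega> \<in> S h} \<le> C2 / real H) \<longrightarrow>
            (\<forall>h\<in>{1..H}.
               (\<integral>\<^sup>+\<omega>. ennreal (exp ((X \<omega>)\<^sup>2 / (2 * K\<^sup>2))) \<partial>cond_on M Y (S h))
                  \<le> ennreal (Cb * real H)
             \<and> (\<forall>m::nat. m \<ge> 1 \<longrightarrow>
                  (\<integral>\<^sup>+\<omega>. ennreal (\<bar>X \<omega>\<bar> ^ m) \<partial>cond_on M Y (S h))
                  \<le> ennreal (Cb * real H * real m * K ^ m * Gamma (real m / 2) / 2))
             \<and> (\<forall>(P :: 'b measure) (Xs :: nat \<Rightarrow> 'b \<Rightarrow> real) (c::nat) (t::real).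
                  prob_space P \<and> c \<ge> 1 \<and> t > 0 \<and>
                  prob_space.indep_vars P (\<lambda>_. borel) Xs {..<c} \<and>
                  (\<forall>i<c. distr P borel (Xs i) = distr (cond_on M Y (S h)) borel X) \<longrightarrow>
                  measure P {\<omega>\<in>space P.
                     \<bar>(\<Sum>i<c. Xs i \<omega>) / real c - (\<integral>\<omega>'. X \<omega>' \<partial>cond_on M Y (S h))\<bar> > t}
                  \<le> 2 * exp (- (real c * t\<^sup>2) / (2 * Cb * real H * K\<^sup>2 + 2 * t * K))))"
  proof (intro allI impI ballI conjI)
    fix H S h
    assume HS: "interval_partition H S \<and> (\<forall>h\<in>{1..H}. C1 / real H \<le> measure M {\<omega>\<in>space M. Y \<omega> \<in> S h} \<and>
                           measure M {\<omega>\<in>space M. Y \<omega> \<in> S h} \<le> C2 / real H)"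
      and h: "h \<in> {1..H}"
    define A where "A = {\<omega>\<in>space M. Y \<omega> \<in> S h}"
    define p where "p = C1 / real H"
    note st = stp[of H S h A, OF _ h _ A_def] 
    have A: "A \<in> sets M" and p: "p > 0" "measure M A \<ge> p"
      and ip: "1 / p = real H / C1" and cq: "cond_on M Y (S h) = uniform_measure M A"
      using st HS h A_def unfolding p_def by auto
    have H0: "real H > 0" using HS unfolding interval_partition_def by simp
    show "(\<integral>\<^sup>+\<omega>. ennreal (exp ((X \<omega>)\<^sup>2 / (2 * K\<^sup>2))) \<partial>cond_on M Y (S h)) \<le> ennreal (Cb * real H)"
    proof -
      have "(\<integral>\<^sup>+\<omega>. ennreal (exp ((X \<omega>)\<^sup>2 / (2 * K\<^sup>2))) \<partial>cond_on M Y (S h))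
            \<le> ennreal (1/p) * (\<integral>\<^sup>+\<omega>. ennreal (exp ((X \<omega>)\<^sup>2 / (2 * K\<^sup>2))) \<partial>M)"
        unfolding cq by (rule cond_nn_le[OF M A p]) measurable
      also have "(\<integral>\<^sup>+\<omega>. ennreal (exp ((X \<omega>)\<^sup>2 / (2 * K\<^sup>2))) \<partial>M) \<le> (\<integral>\<^sup>+\<omega>. ennreal (exp ((X \<omega>)\<^sup>2 / K3\<^sup>2)) \<partial>M)"
      proof (intro nn_integral_mono ennreal_leI)
        fix \<omega>
        have "K3\<^sup>2 \<le> K\<^sup>2" using Kpos KK by (intro power_mono) auto
        hence "K3\<^sup>2 \<le> 2 * K\<^sup>2" using zero_le_power2[of K] by linarith
        moreover have "0 < 2 * K\<^sup>2 * K3\<^sup>2" using Kpos K0 by simp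
        ultimately have "(X \<omega>)\<^sup>2 / (2 * K\<^sup>2) \<le> (X \<omega>)\<^sup>2 / K3\<^sup>2" by (intro divide_left_mono) auto
        thus "exp ((X \<omega>)\<^sup>2 / (2 * K\<^sup>2)) \<le> exp ((X \<omega>)\<^sup>2 / K3\<^sup>2)" by simp
      qed
      hence "ennreal (1/p) * (\<integral>\<^sup>+\<omega>. ennreal (exp ((X \<omega>)\<^sup>2 / (2 * K\<^sup>2))) \<partial>M) \<le> ennreal (1/p) * ennreal (exp 1)"
        using ex by (intro mult_left_mono) auto
      also have "\<dots> = ennreal (real H * (exp 1 / C1))" using p ip C1 by (simp add: ennreal_mult[symmetric])
      also have "\<dots> \<le> ennreal (Cb * real H)"
      proof (intro ennreal_leI)
        have "real H * (exp 1 / C1) \<le> real H * Cb" using eCb H0 by (intro mult_left_mono) auto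
        thus "real H * (exp 1 / C1) \<le> Cb * real H" by (simp add: mult.commute)
      qed
      finally show ?thesis .
    qed
    show "(\<integral>\<^sup>+\<omega>. ennreal (\<bar>X \<omega>\<bar> ^ m) \<partial>cond_on M Y (S h))
                  \<le> ennreal (Cb * real H * real m * K ^ m * Gamma (real m / 2) / 2)" if m: "m \<ge> 1" for m :: nat
    proof -
      define \<Gamma> where "\<Gamma> = real m * Gamma (real m / 2) / 2"
      have \<Gamma>0: "\<Gamma> \<ge> 0" using m by (simp add: \<Gamma>_def)
      have "(\<integral>\<^sup>+\<omega>. ennreal (\<bar>X \<omega>\<bar> ^ m) \<partial>cond_on M Y (S h))
            \<le> ennreal (1/p) * (\<integral>\<^sup>+\<omega>. ennreal (\<bar>X \<omega>\<bar> ^ m) \<partial>M)"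
        unfolding cq by (rule cond_nn_le[OF M A p]) measurable
      also have "(\<integral>\<^sup>+\<omega>. ennreal (\<bar>X \<omega>\<bar> ^ m) \<partial>M) \<le> (\<integral>\<^sup>+\<omega>. ennreal (K3 ^ m * \<Gamma>) * ennreal (exp ((X \<omega>)\<^sup>2 / K3\<^sup>2)) \<partial>M)"
        using abs_pow_bound[OF Kpos(3) m] \<Gamma>0 Kpos
        by (intro nn_integral_mono) (simp add: ennreal_mult[symmetric] ennreal_leI \<Gamma>_def)
      also have "\<dots> = ennreal (K3 ^ m * \<Gamma>) * (\<integral>\<^sup>+\<omega>. ennreal (exp ((X \<omega>)\<^sup>2 / K3\<^sup>2)) \<partial>M)"
        by (rule nn_integral_cmult) measurable
      also have "\<dots> \<le> ennreal (K3 ^ m * \<Gamma>) * ennreal (exp 1)" using ex by (intro mult_left_mono) auto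
      finally have "(\<integral>\<^sup>+\<omega>. ennreal (\<bar>X \<omega>\<bar> ^ m) \<partial>cond_on M Y (S h))
            \<le> ennreal (1/p) * (ennreal (K3 ^ m * \<Gamma>) * ennreal (exp 1))" by (simp add: mult_left_mono)
      also have "\<dots> = ennreal (real H * (exp 1 / C1) * (K3 ^ m * \<Gamma>))"
        using p ip Kpos \<Gamma>0 C1 by (simp add: ennreal_mult[symmetric] mult_ac)
      also have "\<dots> \<le> ennreal (real H * Cb * (K ^ m * \<Gamma>))"
      proof (intro ennreal_leI)
        have a: "K3 ^ m \<le> K ^ m" using Kpos KK by (intro power_mono) auto
        have b: "real H * (exp 1 / C1) \<le> real H * Cb" using eCb H0 by (intro mult_left_mono) auto
        have c: "K3 ^ m * \<Gamma> \<le> K ^ m * \<Gamma>" using a \<Gamma>0 by (rule mult_right_mono)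
        have d: "0 \<le> K3 ^ m * \<Gamma>" using Kpos \<Gamma>0 by simp
        have e: "0 \<le> real H * Cb" using H0 Cb0 by simp
        show "real H * (exp 1 / C1) * (K3 ^ m * \<Gamma>) \<le> real H * Cb * (K ^ m * \<Gamma>)"
          by (rule mult_mono[OF b c e d])
      qed
      also have "real H * Cb * (K ^ m * \<Gamma>) = Cb * real H * real m * K ^ m * Gamma (real m / 2) / 2"
        by (simp add: \<Gamma>_def)
      finally show ?thesis .
    qed
    show "measure P {\<omega>\<in>space P.
                     \<bar>(\<Sum>i<c. Xs i \<omega>) / real c - (\<integral>\<omega>'. X \<omega>' \<partial>cond_on M Y (S h))\<bar> > t}
                  \<le> 2 * exp (- (real c * t\<^sup>2) / (2 * Cb * real H * K\<^sup>2 + 2 * t * K))"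
      if asm: "prob_space P \<and> c \<ge> 1 \<and> t > 0 \<and>
                  prob_space.indep_vars P (\<lambda>_. borel) Xs {..<c} \<and>
                  (\<forall>i<c. distr P borel (Xs i) = distr (cond_on M Y (S h)) borel X)"
      for P :: "'b measure" and Xs :: "nat \<Rightarrow> 'b \<Rightarrow> real" and c :: nat and t :: real
    proof -
      have P: "prob_space P" and c: "c \<ge> 1" and t: "t > 0"
        and ind: "prob_space.indep_vars P (\<lambda>_. borel) Xs {..<c}"
        and dis: "\<forall>i<c. distr P borel (Xs i) = distr (cond_on M Y (S h)) borel X"
        using asm by auto
      define s where "s = 8 * exp 3 * K3\<^sup>2 / p"
      have XQ: "X \<in> borel_measurable (cond_on M Y (S h))"
        unfolding cq by (subst measurable_cong_sets[OF sets_uniform_measure refl]) (rule Xm)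
      have D0: "Cb * real H * K\<^sup>2 > 0" using Cb0 H0 K0 by simp
      have sD: "s \<le> Cb * real H * K\<^sup>2 / 2"
      proof -
        have "K3\<^sup>2 \<le> K\<^sup>2" using Kpos KK by (intro power_mono) auto
        moreover have "real H / C1 \<ge> 0" using H0 C1 by simp
        ultimately have "8 * exp 3 * K3\<^sup>2 * (real H / C1) \<le> 8 * exp 3 * K\<^sup>2 * (real H / C1)"
          by (intro mult_right_mono) auto
        moreover have "s = 8 * exp 3 * K3\<^sup>2 * (real H / C1)" unfolding s_def ip[symmetric] by simp
        moreover have "Cb * real H * K\<^sup>2 / 2 = 8 * exp 3 * K\<^sup>2 * (real H / C1)" unfolding Cb_def by simp
        ultimately show ?thesis by (simp only:)
      qed
      have mgf: "(\<integral>\<^sup>+\<omega>. ennreal (exp (l * (X \<omega> - (\<integral>\<omega>'. X \<omega>' \<partial>cond_on M Y (S h))))) \<partial>cond_on M Y (S h))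
                 \<le> ennreal (exp (l\<^sup>2 * s))" if l: "\<bar>l\<bar> \<le> 1 / K" for l
      proof -
        have "1 / K \<le> 1 / K3" using Kpos KK by (intro divide_left_mono) auto
        hence l3: "\<bar>l\<bar> \<le> 1 / K3" using l by linarith
        show ?thesis unfolding cq s_def by (rule mgf_cond[OF M A p Xm Kpos(3) ex l3])
      qed
      have eq: "2 * (Cb * real H * K\<^sup>2) = 2 * Cb * real H * K\<^sup>2" by (simp only: mult.assoc)
      have R: "measure P {\<omega>\<in>space P.
                     \<bar>(\<Sum>i<c. Xs i \<omega>) / real c - (\<integral>\<omega>'. X \<omega>' \<partial>cond_on M Y (S h))\<bar> > t}
            \<le> 2 * exp (- (real c * t\<^sup>2) / (2 * (Cb * real H * K\<^sup>2) + 2 * t * K))"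
        by (rule bern_part[OF P c t ind dis XQ K0 D0 sD mgf])
      show "measure P {\<omega>\<in>space P.
                     \<bar>(\<Sum>i<c. Xs i \<omega>) / real c - (\<integral>\<omega>'. X \<omega>' \<partial>cond_on M Y (S h))\<bar> > t}
            \<le> 2 * exp (- (real c * t\<^sup>2) / (2 * Cb * real H * K\<^sup>2 + 2 * t * K))"
        using R unfolding eq .
    qed
  qed
  show ?thesis using part1 part2 Cb0 by blast
qed



theorem lemma17:
  fixes M :: "'a measure" and X Y :: "'a \<Rightarrow> real" and K t0 :: real
    and N :: "real measure" and f :: "real \<times> real \<Rightarrow> ennreal"
  assumes M: "prob_space M"
    and N: "sigma_finite_measure N" "sets N = sets borel"
    and joint: "distributed M (lborel \<Otimes>\<^sub>M N) (\<lambda>\<omega>. (X \<omega>, Y \<omega>)) f"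
    and sg: "subgaussian M X"
    and mean0: "integrable M X" "(\<integral>\<omega>. X \<omega> \<partial>M) = 0"
    and ub: "upexp_bounded M X K"
    and t0: "t0 > 0" "\<forall>t. 0 \<le> t \<and> t \<le> t0 \<longrightarrow>
                 (\<integral>\<^sup>+\<omega>. ennreal (exp (t * (X \<omega>)\<^sup>2)) \<partial>M) \<le> ennreal (exp 1)"
  shows
    \<comment> \<open>(i)\<close>
    "(let m = real_cond_exp M (vimage_algebra (space M) Y borel) X;
          \<epsilon> = (\<lambda>\<omega>. X \<omega> - m \<omega>)
      in subgaussian M m \<and> upexp_bounded M m K \<and>
         subgaussian M \<epsilon> \<and> upexp_bounded M \<epsilon> (2 * K))
   \<and>
    \<comment> \<open>(ii)\<close>
    (let Z = {y. \<exists>t\<in>{0<..t0}. (\<integral>\<^sup>+x. ennreal (exp (t * x\<^sup>2)) * f (x, y) \<partial>lborel) = \<infinity>}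
      in AE \<omega> in M. Y \<omega> \<notin> Z)
   \<and>
    \<comment> \<open>(iii) and (iv)\<close>
    (\<forall>C1 C2. 0 < C1 \<and> C1 < 1 \<and> 1 < C2 \<longrightarrow>
      (\<exists>C. \<forall>H S. interval_partition H S \<and>
              (\<forall>h\<in>{1..H}. C1 / real H \<le> measure M {\<omega>\<in>space M. Y \<omega> \<in> S h} \<and>
                           measure M {\<omega>\<in>space M. Y \<omega> \<in> S h} \<le> C2 / real H) \<longrightarrow>
            (\<forall>h\<in>{1..H}. \<forall>t\<ge>0.
               measure (cond_on M Y (S h)) {\<omega>\<in>space M. X \<omega> > t}
                 \<le> C * real H * exp (1 - t\<^sup>2 / K\<^sup>2)))
      \<and>
      (\<exists>C>0. \<forall>H S. interval_partition H S \<and>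
              (\<forall>h\<in>{1..H}. C1 / real H \<le> measure M {\<omega>\<in>space M. Y \<omega> \<in> S h} \<and>
                           measure M {\<omega>\<in>space M. Y \<omega> \<in> S h} \<le> C2 / real H) \<longrightarrow>
            (\<forall>h\<in>{1..H}.
               (\<integral>\<^sup>+\<omega>. ennreal (exp ((X \<omega>)\<^sup>2 / (2 * K\<^sup>2))) \<partial>cond_on M Y (S h))
                  \<le> ennreal (C * real H)
             \<and> (\<forall>m::nat. m \<ge> 1 \<longrightarrow>
                  (\<integral>\<^sup>+\<omega>. ennreal (\<bar>X \<omega>\<bar> ^ m) \<partial>cond_on M Y (S h))
                  \<le> ennreal (C * real H * real m * K ^ m * Gamma (real m / 2) / 2))
             \<and> (\<forall>(P :: 'b measure) (Xs :: nat \<Rightarrow> 'b \<Rightarrow> real) (c::nat) (t::real).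
                  prob_space P \<and> c \<ge> 1 \<and> t > 0 \<and>
                  prob_space.indep_vars P (\<lambda>_. borel) Xs {..<c} \<and>
                  (\<forall>i<c. distr P borel (Xs i) = distr (cond_on M Y (S h)) borel X) \<longrightarrow>
                  measure P {\<omega>\<in>space P.
                     \<bar>(\<Sum>i<c. Xs i \<omega>) / real c - (\<integral>\<omega>'. X \<omega>' \<partial>cond_on M Y (S h))\<bar> > t}
                  \<le> 2 * exp (- (real c * t\<^sup>2) / (2 * C * real H * K\<^sup>2 + 2 * t * K))))))"
proof -
  have XYm[measurable]: "(\<lambda>\<omega>. (X \<omega>, Y \<omega>)) \<in> measurable M (lborel \<Otimes>\<^sub>M N)"
    using distributed_measurable[OF joint] .
  have "(\<lambda>\<omega>. fst (X \<omega>, Y \<omega>)) \<in> measurable M lborel" by measurable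
  hence Xm: "X \<in> borel_measurable M" by simp
  have "(\<lambda>\<omega>. snd (X \<omega>, Y \<omega>)) \<in> measurable M N" by measurable
  hence "Y \<in> measurable M N" by simp
  hence Ym: "Y \<in> borel_measurable M" using measurable_cong_sets[OF refl N(2)] by blast
  show ?thesis
    using part_i[OF M Xm Ym mean0 ub] part_ii[OF M N joint t0] part_iii[OF M Xm Ym mean0 ub] by blast
qed

end
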